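(* Let $\gamma>0$ and let $R_W$ be any matrix with $W=R_W^\top R_W$. Suppose $\mu\in\mathbb{R}_+$, $P\in\mathbb{S}^{n_x}_{\succ0}$, $\tilde Z\in\mathbb{S}^{n_y}_{\succ0}$, $G\in\mathbb{R}^{n_x\times n_y}$, $Y\in\mathbb{R}^{n_y\times n_a}$ satisfy $$\begin{bmatrix}P & PA-GC & PB_\omega-GD_\omega\\ * & P & 0\\ * & * & I\end{bmatrix}\succ0,\qquad \begin{bmatrix}\tilde Z & \tilde ZC & \tilde ZD_\omega\\ * & P & 0\\ * & 0 & I\end{bmatrix}\succ0,$$ $$\begin{bmatrix}\begin{bmatrix}Y^\top D_a+D_a^\top Y & D_a^\top R_W^\top\\ R_WD_a & 2\mu I\end{bmatrix} & \begin{bmatrix}\Gamma_1 & 0\\ 0 & \mu I\end{bmatrix}\\ * & \begin{bmatrix}\Gamma_2 & 0\\ 0 & \mu I\end{bmatrix}\end{bmatrix}\succeq0,$$ where $\Gamma_1=\begin{bmatrix}Y^\top C & D_a^\top G^\top & Y^\top D_\omega\end{bmatrix}$ and $\Gamma_2=\mathrm{diag}\big((2+1/\gamma)^{-1}P,\ \tfrac1\gamma P,\ \tfrac12 I\big)$. Then with $L=P^{-1}G$ and $\lambda=1/\mu$, we have $\rho(A-LC)<1$ and $$\tfrac12D_a^\top(I-CL)^\top\Sigma_{r_\omega}^{-1}(L)(I-CL)D_a-\lambda D_a^\top WD_a\succeq0.$$ Hence minimizing $\mu$ subject to these LMIs yields an approximation (a feasible point with $\lambda=1/\mu$) of the one-step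 design problem $\max_{L,\lambda\in\mathbb{R}_+}\{\lambda:\ \tfrac12D_a^\top(I-CL)^\top\Sigma_{r_\omega}^{-1}(L)(I-CL)D_a-\lambda D_a^\top WD_a\succeq0,\ \rho(A-LC)<1\}$.
   Context: System: $x(k+1)=Ax(k)+Bu(k)+B_\omega\omega(k)$, $y(k)=Cx(k)+D_\omega\omega(k)+y_a(k)$, $x\in\mathbb{R}^{n_x}$, $y\in\mathbb{R}^{n_y}$, $\omega(k)\sim\mathcal N(0,I_{n_\omega})$ i.i.d., $(A,C)$ detectable, $(A,B_\omega)$ stabilizable; observer $\hat x(k+1)=A\hat x+Bu+L(y-C\hat x)$ with residual $r=y-C\hat x$. Bias injection attack $y_a(k)=D_a\bar a$ for $k\ge0$ (zero before), with $D_a\in\mathbb{R}^{n_y\times n_a}$ having entries $(j_i,i)=1$ for compromised sensor indices $j_1<\dots<j_{n_a}$ and zeros elsewhere; $W\in\mathbb{R}^{n_y\times n_y}$ symmetric positive semidefinite. $\rho$ is spectral radius, $\mathbb{R}_+$ the positive reals, $\mathbb{S}^n_{\succ0}$ the symmetric positive definite $n\times n$ matrices, $*$ denotes blocks determined by symmetry. For stabilizing $L$, $\Sigma_{\tilde x}(L)$ solves $\Sigma=(A-LC)\Sigma(A-LC)^\top+(B_\omega-LD_\omega)(B_\omega-LD_\omega)^\top$ and $\Sigma_{r_\omega}(L)=C\Sigma_{\tilde x}(L)C^\top+D_\omega D_\omega^\top$ (assumed invertible). *)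

theory Defs
  imports "Jordan_Normal_Form.Spectral_Radius" "Jordan_Normal_Form.Gauss_Jordan_Elimination"
begin

definition psd_mat :: "nat \<Rightarrow> real mat \<Rightarrow> bool" where
  "psd_mat n M \<longleftrightarrow> M \<in> carrier_mat n n \<and> transpose_mat M = M \<and>
     (\<forall>v \<in> carrier_vec n. 0 \<le> v \<bullet> (M *\<^sub>v v))"

definition pd_mat :: "nat \<Rightarrow> real mat \<Rightarrow> bool" where
  "pd_mat n M \<longleftrightarrow> M \<in> carrier_mat n n \<and> transpose_mat M = M \<and>
     (\<forall>v \<in> carrier_vec n. v \<noteq> 0\<^sub>v n \<longrightarrow> 0 < v \<bullet> (M *\<^sub>v v))"

definition rho :: "real mat \<Rightarrow> real" where
  "rho M = spectral_radius (map_mat complex_of_real M)"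

definition hcat :: "real mat \<Rightarrow> real mat \<Rightarrow> real mat" where
  "hcat X Z = mat (dim_row X) (dim_col X + dim_col Z)
     (\<lambda>(i,j). if j < dim_col X then X $$ (i,j) else Z $$ (i, j - dim_col X))"

definition vcat :: "real mat \<Rightarrow> real mat \<Rightarrow> real mat" where
  "vcat X Z = mat (dim_row X + dim_row Z) (dim_col X)
     (\<lambda>(i,j). if i < dim_row X then X $$ (i,j) else Z $$ (i - dim_row X, j))"

(* symmetric 3x3 block matrix [M11 M12 M13; * M22 M23; * * M33] *)
definition sym3 :: "real mat \<Rightarrow> real mat \<Rightarrow> real mat \<Rightarrow> real mat \<Rightarrow> real mat \<Rightarrow> real mat \<Rightarrow> real mat" where
  "sym3 M11 M12 M13 M22 M23 M33 =
     four_block_mat (four_block_mat M11 M12 (transpose_mat M12) M22)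
                    (vcat M13 M23)
                    (hcat (transpose_mat M13) (transpose_mat M23)) M33"

definition bdiag :: "real mat \<Rightarrow> real mat \<Rightarrow> real mat" where
  "bdiag X Z = four_block_mat X (0\<^sub>m (dim_row X) (dim_col Z)) (0\<^sub>m (dim_row Z) (dim_col X)) Z"

definition detectable :: "nat \<Rightarrow> nat \<Rightarrow> real mat \<Rightarrow> real mat \<Rightarrow> bool" where
  "detectable nx ny A C \<longleftrightarrow> (\<exists>L \<in> carrier_mat nx ny. rho (A - L * C) < 1)"

definition stabilizable :: "nat \<Rightarrow> nat \<Rightarrow> real mat \<Rightarrow> real mat \<Rightarrow> bool" where
  "stabilizable nx nw A B \<longleftrightarrow> (\<exists>K \<in> carrier_mat nw nx. rho (A - B * K) < 1)"

(* Sigma_xtilde(L): the solution of the Lyapunov equation (unique for stabilizing L) *)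
definition Sigma_xt :: "nat \<Rightarrow> real mat \<Rightarrow> real mat \<Rightarrow> real mat \<Rightarrow> real mat \<Rightarrow> real mat \<Rightarrow> real mat" where
  "Sigma_xt nx A C Bw Dw L = (THE S. S \<in> carrier_mat nx nx \<and>
     S = (A - L * C) * S * transpose_mat (A - L * C)
         + (Bw - L * Dw) * transpose_mat (Bw - L * Dw))"

definition Sigma_rw :: "nat \<Rightarrow> real mat \<Rightarrow> real mat \<Rightarrow> real mat \<Rightarrow> real mat \<Rightarrow> real mat \<Rightarrow> real mat" where
  "Sigma_rw nx A C Bw Dw L =
     C * Sigma_xt nx A C Bw Dw L * transpose_mat C + Dw * transpose_mat Dw"

(* attack matrix D_a selecting compromised sensors j 0 < ... < j (na-1) *)
definition attack_mat :: "nat \<Rightarrow> nat \<Rightarrow> (nat \<Rightarrow> nat) \<Rightarrow> real mat" where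
  "attack_mat ny na j = mat ny na (\<lambda>(r,c). if r = j c then 1 else 0)"

end

theory Submission
  imports Defs
begin


lemma vcat_carrier[simp]: "X \<in> carrier_mat r1 c \<Longrightarrow> Z \<in> carrier_mat r2 c \<Longrightarrow> vcat X Z \<in> carrier_mat (r1+r2) c"
  unfolding vcat_def by auto

lemma hcat_carrier[simp]: "X \<in> carrier_mat r c1 \<Longrightarrow> Z \<in> carrier_mat r c2 \<Longrightarrow> hcat X Z \<in> carrier_mat r (c1+c2)"
  unfolding hcat_def by auto

lemma bdiag_carrier[simp]: "X \<in> carrier_mat r1 c1 \<Longrightarrow> Z \<in> carrier_mat r2 c2 \<Longrightarrow> bdiag X Z \<in> carrier_mat (r1+r2) (c1+c2)"
  unfolding bdiag_def by auto

lemma vcat_mult_vec: assumes X: "X \<in> carrier_mat r1 c" and Z: "Z \<in> carrier_mat r2 c" and w: "w \<in> carrier_vec c"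
  shows "vcat X Z *\<^sub>v w = (X *\<^sub>v w) @\<^sub>v (Z *\<^sub>v w)"
proof (rule eq_vecI)
  fix i assume "i < dim_vec ((X *\<^sub>v w) @\<^sub>v (Z *\<^sub>v w))"
  then have i: "i < r1 + r2" using X Z by auto
  have row: "row (vcat X Z) i = (if i < r1 then row X i else row Z (i - r1))"
    using X Z i by (intro eq_vecI, auto simp: vcat_def)
  show "(vcat X Z *\<^sub>v w) $ i = ((X *\<^sub>v w) @\<^sub>v (Z *\<^sub>v w)) $ i"
    using X Z i by (subst index_mult_mat_vec, simp add: vcat_def, simp add: row)
qed (insert X Z, auto simp: vcat_def)

lemma hcat_mult_vec: assumes X: "X \<in> carrier_mat r c1" and Z: "Z \<in> carrier_mat r c2"
  and a: "a \<in> carrier_vec c1" and b: "b \<in> carrier_vec c2"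
  shows "hcat X Z *\<^sub>v (a @\<^sub>v b) = X *\<^sub>v a + Z *\<^sub>v b"
proof (rule eq_vecI)
  fix i assume "i < dim_vec (X *\<^sub>v a + Z *\<^sub>v b)"
  then have i: "i < r" using X Z by auto
  have row: "row (hcat X Z) i = row X i @\<^sub>v row Z i"
    using X Z i by (intro eq_vecI, auto simp: hcat_def)
  show "(hcat X Z *\<^sub>v (a @\<^sub>v b)) $ i = (X *\<^sub>v a + Z *\<^sub>v b) $ i"
    using X Z i a b by (subst index_mult_mat_vec, simp add: hcat_def, simp add: row scalar_prod_append[of _ c1 _ c2])
qed (insert X Z, auto simp: hcat_def)

lemma qf_four_block: assumes A: "A \<in> carrier_mat n1 n1" and B: "B \<in> carrier_mat n1 n2"
  and C: "C \<in> carrier_mat n2 n1" and D: "D \<in> carrier_mat n2 n2"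
  and a: "a \<in> carrier_vec n1" and d: "d \<in> carrier_vec n2"
  shows "(a @\<^sub>v d) \<bullet> (four_block_mat A B C D *\<^sub>v (a @\<^sub>v d)) =
     a \<bullet> (A *\<^sub>v a) + a \<bullet> (B *\<^sub>v d) + d \<bullet> (C *\<^sub>v a) + d \<bullet> (D *\<^sub>v d)"
  using assms by (simp add: four_block_mat_mult_vec[OF A B C D a d] scalar_prod_append[of _ n1 _ n2]
      scalar_prod_add_distrib[of _ n1] scalar_prod_add_distrib[of _ n2] add.assoc)

lemma bil_four_block: assumes A: "A \<in> carrier_mat n1 m1" and B: "B \<in> carrier_mat n1 m2"
  and C: "C \<in> carrier_mat n2 m1" and D: "D \<in> carrier_mat n2 m2"
  and a: "a \<in> carrier_vec m1" and d: "d \<in> carrier_vec m2"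
  and x: "x \<in> carrier_vec n1" and y: "y \<in> carrier_vec n2"
  shows "(x @\<^sub>v y) \<bullet> (four_block_mat A B C D *\<^sub>v (a @\<^sub>v d)) =
     x \<bullet> (A *\<^sub>v a) + x \<bullet> (B *\<^sub>v d) + y \<bullet> (C *\<^sub>v a) + y \<bullet> (D *\<^sub>v d)"
  using assms by (simp add: four_block_mat_mult_vec[OF A B C D a d] scalar_prod_append[of _ n1 _ n2]
      scalar_prod_add_distrib[of _ n1] scalar_prod_add_distrib[of _ n2] add.assoc)

lemma tr_move: assumes "A \<in> carrier_mat r c" "x \<in> carrier_vec c" "y \<in> carrier_vec r"
  shows "x \<bullet> (transpose_mat A *\<^sub>v y) = y \<bullet> (A *\<^sub>v (x :: real vec))"
  using transpose_vec_mult_scalar[OF assms] comm_scalar_prod[of x c] assms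
  by (metis mult_mat_vec_carrier transpose_carrier_mat)

lemma qf_sym3: assumes M11: "M11 \<in> carrier_mat n1 n1" and M12: "M12 \<in> carrier_mat n1 n2"
  and M13: "M13 \<in> carrier_mat n1 n3" and M22: "M22 \<in> carrier_mat n2 n2"
  and M23: "M23 \<in> carrier_mat n2 n3" and M33: "M33 \<in> carrier_mat n3 n3"
  and x: "x \<in> carrier_vec n1" and y: "y \<in> carrier_vec n2" and w: "w \<in> carrier_vec n3"
  shows "((x @\<^sub>v y) @\<^sub>v w) \<bullet> (sym3 M11 M12 M13 M22 M23 M33 *\<^sub>v ((x @\<^sub>v y) @\<^sub>v w)) =
    x \<bullet> (M11 *\<^sub>v x) + 2 * (x \<bullet> (M12 *\<^sub>v y)) + 2 * (x \<bullet> (M13 *\<^sub>v w)) + y \<bullet> (M22 *\<^sub>v y)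
    + 2 * (y \<bullet> (M23 *\<^sub>v w)) + w \<bullet> (M33 *\<^sub>v w)"
proof -
  have xy: "x @\<^sub>v y \<in> carrier_vec (n1+n2)" using x y by auto
  have c1: "four_block_mat M11 M12 (transpose_mat M12) M22 \<in> carrier_mat (n1+n2) (n1+n2)"
    using assms by auto
  have c2: "vcat M13 M23 \<in> carrier_mat (n1+n2) n3" using assms by auto
  have c3: "hcat (transpose_mat M13) (transpose_mat M23) \<in> carrier_mat n3 (n1+n2)" using assms by auto
  show ?thesis
    unfolding sym3_def
    apply (subst qf_four_block[OF c1 c2 c3 M33 xy w])
    apply (subst qf_four_block[OF M11 M12 _ M22 x y], use M12 in simp)
    using assms
    apply (simp add: vcat_mult_vec[OF M13 M23 w] hcat_mult_vec[of _ n3 n1 _ n2]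
       scalar_prod_append[of _ n1 _ n2] scalar_prod_add_distrib[of _ n3] tr_move)
    done
qed



lemma zero_mat_mult_vec[simp]: "d \<in> carrier_vec m \<Longrightarrow> 0\<^sub>m n m *\<^sub>v d = 0\<^sub>v n"
  by (intro eq_vecI, auto)

lemma smult_one_mult_vec[simp]: "r \<in> carrier_vec n \<Longrightarrow> (c \<cdot>\<^sub>m 1\<^sub>m n) *\<^sub>v r = c \<cdot>\<^sub>v (r :: real vec)"
  by (intro eq_vecI, auto)

lemma smult_mat_mult_vec[simp]: "P \<in> carrier_mat n m \<Longrightarrow> p \<in> carrier_vec m \<Longrightarrow> (c \<cdot>\<^sub>m P) *\<^sub>v p = c \<cdot>\<^sub>v (P *\<^sub>v (p :: real vec))"
  by (intro eq_vecI, auto simp: scalar_prod_def sum_distrib_left ac_simps)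

lemma bdiag_bil: assumes X: "X \<in> carrier_mat n1 m1" and Z: "Z \<in> carrier_mat n2 m2"
  and a: "a \<in> carrier_vec m1" and d: "d \<in> carrier_vec m2"
  and x: "x \<in> carrier_vec n1" and y: "y \<in> carrier_vec n2"
  shows "(x @\<^sub>v y) \<bullet> (bdiag X Z *\<^sub>v (a @\<^sub>v d)) = x \<bullet> (X *\<^sub>v a) + y \<bullet> (Z *\<^sub>v (d :: real vec))"
  unfolding bdiag_def
  by (subst bil_four_block[of _ n1 m1 _ m2 _ n2], insert assms, auto)

lemma lmi3_qf:
  fixes Y Da RW C G Dw P :: "real mat"
  assumes Y: "Y \<in> carrier_mat ny na" and Da: "Da \<in> carrier_mat ny na"
   and RW: "RW \<in> carrier_mat nr ny" and C: "C \<in> carrier_mat ny nx"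
   and G: "G \<in> carrier_mat nx ny" and Dw: "Dw \<in> carrier_mat ny nw"
   and P: "P \<in> carrier_mat nx nx"
   and x: "x \<in> carrier_vec na" and r: "r \<in> carrier_vec nr"
   and p: "p \<in> carrier_vec nx" and q: "q \<in> carrier_vec nx"
   and w: "w \<in> carrier_vec nw" and r2: "r2 \<in> carrier_vec nr"
  shows "let M = four_block_mat (transpose_mat Y * Da + transpose_mat Da * Y)
                  (transpose_mat Da * transpose_mat RW) (RW * Da) ((2 * mu) \<cdot>\<^sub>m 1\<^sub>m nr);
            Gamma1 = hcat (hcat (transpose_mat Y * C) (transpose_mat Da * transpose_mat G))
                          (transpose_mat Y * Dw);
            Gamma2 = bdiag (bdiag (c1 \<cdot>\<^sub>m P) (c2 \<cdot>\<^sub>m P))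
                           ((1 / 2) \<cdot>\<^sub>m 1\<^sub>m nw);
            N = bdiag Gamma1 (mu \<cdot>\<^sub>m 1\<^sub>m nr);
            Q = bdiag Gamma2 (mu \<cdot>\<^sub>m 1\<^sub>m nr)
        in ((x @\<^sub>v r) @\<^sub>v (((p @\<^sub>v q) @\<^sub>v w) @\<^sub>v r2)) \<bullet> (four_block_mat M N (transpose_mat N) Q *\<^sub>v ((x @\<^sub>v r) @\<^sub>v (((p @\<^sub>v q) @\<^sub>v w) @\<^sub>v r2)))
         = x \<bullet> ((transpose_mat Y * Da + transpose_mat Da * Y) *\<^sub>v x) + 2 * (x \<bullet> ((transpose_mat Da * transpose_mat RW) *\<^sub>v r))
           + 2 * mu * (r \<bullet> r)
           + 2 * (x \<bullet> ((transpose_mat Y * C) *\<^sub>v p) + x \<bullet> ((transpose_mat Da * transpose_mat G) *\<^sub>v q) + x \<bullet> ((transpose_mat Y * Dw) *\<^sub>v w))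
           + 2 * mu * (r \<bullet> r2) + c1 * (p \<bullet> (P *\<^sub>v p)) + c2 * (q \<bullet> (P *\<^sub>v q)) + 1/2 * (w \<bullet> w) + mu * (r2 \<bullet> r2)"
proof -
  define M where "M = four_block_mat (transpose_mat Y * Da + transpose_mat Da * Y)
                  (transpose_mat Da * transpose_mat RW) (RW * Da) ((2 * mu) \<cdot>\<^sub>m 1\<^sub>m nr)"
  define Gamma1 where "Gamma1 = hcat (hcat (transpose_mat Y * C) (transpose_mat Da * transpose_mat G))
                          (transpose_mat Y * Dw)"
  define Gamma2 where "Gamma2 = bdiag (bdiag (c1 \<cdot>\<^sub>m P) (c2 \<cdot>\<^sub>m P)) ((1 / 2) \<cdot>\<^sub>m 1\<^sub>m nw)"
  define N where "N = bdiag Gamma1 (mu \<cdot>\<^sub>m 1\<^sub>m nr)"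
  define Q where "Q = bdiag Gamma2 (mu \<cdot>\<^sub>m 1\<^sub>m nr)"
  have cG1: "Gamma1 \<in> carrier_mat na (nx + nx + nw)" unfolding Gamma1_def using assms by auto
  have cG2: "Gamma2 \<in> carrier_mat (nx + nx + nw) (nx + nx + nw)" unfolding Gamma2_def using assms by auto
  have cM: "M \<in> carrier_mat (na + nr) (na + nr)" unfolding M_def using assms by auto
  have cN: "N \<in> carrier_mat (na + nr) (nx + nx + nw + nr)" unfolding N_def using cG1 by auto
  have cQ: "Q \<in> carrier_mat (nx + nx + nw + nr) (nx + nx + nw + nr)" unfolding Q_def using cG2 by auto
  have xr: "x @\<^sub>v r \<in> carrier_vec (na + nr)" using x r by auto
  have pqw: "(p @\<^sub>v q) @\<^sub>v w \<in> carrier_vec (nx + nx + nw)" using p q w by auto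
  have z: "((p @\<^sub>v q) @\<^sub>v w) @\<^sub>v r2 \<in> carrier_vec (nx + nx + nw + nr)" using pqw r2 by auto
  have e1: "(x @\<^sub>v r) \<bullet> (M *\<^sub>v (x @\<^sub>v r)) = x \<bullet> ((transpose_mat Y * Da + transpose_mat Da * Y) *\<^sub>v x) + 2 * (x \<bullet> ((transpose_mat Da * transpose_mat RW) *\<^sub>v r))
           + 2 * mu * (r \<bullet> r)"
    unfolding M_def
    apply (subst qf_four_block[of _ na _ nr], insert assms, auto)
    apply (subst tr_move[of Da ny na], insert assms, auto)
    using transpose_vec_mult_scalar[of RW nr ny "Da *\<^sub>v x" r] assms by auto
  have e2: "(x @\<^sub>v r) \<bullet> (N *\<^sub>v (((p @\<^sub>v q) @\<^sub>v w) @\<^sub>v r2)) =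
     x \<bullet> ((transpose_mat Y * C) *\<^sub>v p) + x \<bullet> ((transpose_mat Da * transpose_mat G) *\<^sub>v q) + x \<bullet> ((transpose_mat Y * Dw) *\<^sub>v w)
     + mu * (r \<bullet> r2)"
    unfolding N_def
    apply (subst bdiag_bil[OF cG1 _ pqw r2 x r], force)
    unfolding Gamma1_def
    apply (subst hcat_mult_vec[of _ na "nx+nx" _ nw], insert assms, auto)
    apply (subst hcat_mult_vec[of _ na nx _ nx], insert assms, auto)
    apply (simp add: scalar_prod_add_distrib[of _ na])
    done
  have e3: "(((p @\<^sub>v q) @\<^sub>v w) @\<^sub>v r2) \<bullet> (Q *\<^sub>v (((p @\<^sub>v q) @\<^sub>v w) @\<^sub>v r2)) =
     c1 * (p \<bullet> (P *\<^sub>v p)) + c2 * (q \<bullet> (P *\<^sub>v q)) + 1/2 * (w \<bullet> w) + mu * (r2 \<bullet> r2)"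
    unfolding Q_def
    apply (subst bdiag_bil[OF cG2 _ pqw r2 pqw r2], force)
    unfolding Gamma2_def
    apply (subst bdiag_bil[of _ "nx+nx" "nx+nx" _ nw nw], insert assms, auto)
    apply (subst bdiag_bil[of _ nx nx _ nx nx], insert assms, auto)
    done
  show ?thesis
    unfolding Let_def M_def[symmetric] Gamma1_def[symmetric] Gamma2_def[symmetric] N_def[symmetric] Q_def[symmetric]
    apply (subst qf_four_block[OF cM cN _ cQ xr z], use cN in simp)
    apply (subst tr_move[OF cN z xr])
    unfolding e1 e2 e3 by (simp add: algebra_simps)
qed



lemma smult_mat_mult_vec_gen: "P \<in> carrier_mat n m \<Longrightarrow> p \<in> carrier_vec m \<Longrightarrow> (c \<cdot>\<^sub>m P) *\<^sub>v p = c \<cdot>\<^sub>v (P *\<^sub>v (p :: 'a :: comm_ring_1 vec))"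
  by (intro eq_vecI, auto simp: scalar_prod_def sum_distrib_left ac_simps)

lemma mat_mult_zero_vec[simp]: "F \<in> carrier_mat n m \<Longrightarrow> F *\<^sub>v 0\<^sub>v m = (0\<^sub>v n :: 'a :: comm_ring_1 vec)"
  by (intro eq_vecI, auto)

lemma sym_bil: assumes P: "P \<in> carrier_mat n n" "transpose_mat P = P" and a: "a \<in> carrier_vec n" and b: "b \<in> carrier_vec n"
  shows "a \<bullet> (P *\<^sub>v b) = b \<bullet> (P *\<^sub>v (a :: real vec))"
  using tr_move[of P n n a b] assms by simp

lemma pd_pos: "pd_mat n P \<Longrightarrow> v \<in> carrier_vec n \<Longrightarrow> v \<noteq> 0\<^sub>v n \<Longrightarrow> 0 < v \<bullet> (P *\<^sub>v v)"
  unfolding pd_mat_def by auto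

lemma pd_nonneg: "pd_mat n P \<Longrightarrow> v \<in> carrier_vec n \<Longrightarrow> 0 \<le> v \<bullet> (P *\<^sub>v v)"
  unfolding pd_mat_def by (cases "v = 0\<^sub>v n", auto simp: less_imp_le)

lemma qf_expand: assumes P: "P \<in> carrier_mat n n" "transpose_mat P = P" and a: "a \<in> carrier_vec n" and b: "b \<in> carrier_vec n"
  shows "(s \<cdot>\<^sub>v a + t \<cdot>\<^sub>v b) \<bullet> (P *\<^sub>v (s \<cdot>\<^sub>v a + t \<cdot>\<^sub>v b)) =
     s * s * (a \<bullet> (P *\<^sub>v a)) + 2 * s * t * (a \<bullet> (P *\<^sub>v b)) + t * t * (b \<bullet> (P *\<^sub>v (b :: real vec)))"
proof -
  have "(s \<cdot>\<^sub>v a + t \<cdot>\<^sub>v b) \<bullet> (P *\<^sub>v (s \<cdot>\<^sub>v a + t \<cdot>\<^sub>v b)) =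
     s * s * (a \<bullet> (P *\<^sub>v a)) + s * t * (a \<bullet> (P *\<^sub>v b)) + t * s * (b \<bullet> (P *\<^sub>v a)) + t * t * (b \<bullet> (P *\<^sub>v b))"
    using assms by (simp add: mult_add_distrib_mat_vec[of _ n n] mult_mat_vec[of _ n n]
        add_scalar_prod_distrib[of _ n] scalar_prod_add_distrib[of _ n] algebra_simps)
  then show ?thesis using sym_bil[OF P a b] by (simp add: algebra_simps)
qed

lemma lyap_rho:
  fixes F P :: "real mat"
  assumes F: "F \<in> carrier_mat n n" and P: "pd_mat n P" and n: "0 < n"
    and ly: "\<And>y. y \<in> carrier_vec n \<Longrightarrow> y \<noteq> 0\<^sub>v n \<Longrightarrow> (F *\<^sub>v y) \<bullet> (P *\<^sub>v (F *\<^sub>v y)) < y \<bullet> (P *\<^sub>v y)"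
  shows "rho F < 1"
proof -
  let ?Fc = "map_mat complex_of_real F"
  have Fc: "?Fc \<in> carrier_mat n n" using F by auto
  have Pc: "P \<in> carrier_mat n n" "transpose_mat P = P" using P unfolding pd_mat_def by auto
  have ly': "(F *\<^sub>v y) \<bullet> (P *\<^sub>v (F *\<^sub>v y)) \<le> y \<bullet> (P *\<^sub>v y)" if y: "y \<in> carrier_vec n" for y
  proof (cases "y = 0\<^sub>v n")
    case True then show ?thesis using F Pc by simp
  qed (use ly[OF y] in auto)
  have ev_lt: "norm l < 1" if ev: "eigenvalue ?Fc l" for l
  proof -
    obtain v where v: "v \<in> carrier_vec n" "v \<noteq> 0\<^sub>v n" "?Fc *\<^sub>v v = l \<cdot>\<^sub>v v"
      using ev Fc unfolding eigenvalue_def eigenvector_def by auto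
    define a where "a = map_vec Re v"
    define b where "b = map_vec Im v"
    have a: "a \<in> carrier_vec n" and b: "b \<in> carrier_vec n" using v unfolding a_def b_def by auto
    have Fa: "F *\<^sub>v a = Re l \<cdot>\<^sub>v a + (- Im l) \<cdot>\<^sub>v b" and Fb: "F *\<^sub>v b = Im l \<cdot>\<^sub>v a + Re l \<cdot>\<^sub>v b"
    proof -
      { fix i assume i: "i < n"
        have e: "(\<Sum>k<n. complex_of_real (F $$ (i,k)) * v $ k) = l * v $ i"
          using arg_cong[OF v(3), of "\<lambda>x. x $ i"] i F v(1) by (simp add: scalar_prod_def row_def lessThan_atLeast0)
        have "(F *\<^sub>v a) $ i = (\<Sum>k<n. F $$ (i,k) * Re (v $ k))"
          using i F v by (simp add: a_def scalar_prod_def row_def lessThan_atLeast0)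
        also have "\<dots> = Re (\<Sum>k<n. complex_of_real (F $$ (i,k)) * v $ k)" by (simp add: Re_sum)
        also have "\<dots> = Re l * a $ i - Im l * b $ i" unfolding e using i v by (simp add: a_def b_def)
        finally have 1: "(F *\<^sub>v a) $ i = Re l * a $ i - Im l * b $ i" .
        have "(F *\<^sub>v b) $ i = (\<Sum>k<n. F $$ (i,k) * Im (v $ k))"
          using i F v by (simp add: b_def scalar_prod_def row_def lessThan_atLeast0)
        also have "\<dots> = Im (\<Sum>k<n. complex_of_real (F $$ (i,k)) * v $ k)" by (simp add: Im_sum)
        also have "\<dots> = Im l * a $ i + Re l * b $ i" unfolding e using i v by (simp add: a_def b_def)
        finally have 2: "(F *\<^sub>v b) $ i = Im l * a $ i + Re l * b $ i" .
        note 1 2 }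
      note * = this
      show "F *\<^sub>v a = Re l \<cdot>\<^sub>v a + (- Im l) \<cdot>\<^sub>v b" by (rule eq_vecI, insert * F a b, auto)
      show "F *\<^sub>v b = Im l \<cdot>\<^sub>v a + Re l \<cdot>\<^sub>v b" by (rule eq_vecI, insert * F a b, auto)
    qed
    have ab: "a \<noteq> 0\<^sub>v n \<or> b \<noteq> 0\<^sub>v n"
    proof (rule ccontr)
      assume "\<not> ?thesis"
      then have "a = 0\<^sub>v n" "b = 0\<^sub>v n" by auto
      then have ab0: "a $ i = 0" "b $ i = 0" if "i < n" for i using that by auto
      have "v = 0\<^sub>v n"
      proof (rule eq_vecI)
        fix i assume "i < dim_vec (0\<^sub>v n)"
        then have i: "i < n" by simp
        show "v $ i = 0\<^sub>v n $ i" using ab0[OF i] i v(1) by (simp add: a_def b_def complex_eq_iff)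
      qed (use v(1) in simp)
      with v show False by auto
    qed
    define qa where "qa = a \<bullet> (P *\<^sub>v a)"
    define qb where "qb = b \<bullet> (P *\<^sub>v b)"
    define qab where "qab = a \<bullet> (P *\<^sub>v b)"
    have sum_lt: "(F *\<^sub>v a) \<bullet> (P *\<^sub>v (F *\<^sub>v a)) + (F *\<^sub>v b) \<bullet> (P *\<^sub>v (F *\<^sub>v b)) < qa + qb"
      using ab ly[OF a] ly[OF b] ly'[OF a] ly'[OF b] unfolding qa_def qb_def by fastforce
    have pos: "0 < qa + qb"
      using ab pd_pos[OF P a] pd_pos[OF P b] pd_nonneg[OF P a] pd_nonneg[OF P b] unfolding qa_def qb_def by fastforce
    have "(F *\<^sub>v a) \<bullet> (P *\<^sub>v (F *\<^sub>v a)) + (F *\<^sub>v b) \<bullet> (P *\<^sub>v (F *\<^sub>v b)) = ((Re l)^2 + (Im l)^2) * (qa + qb)"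
      unfolding Fa Fb qf_expand[OF Pc a b] qa_def[symmetric] qb_def[symmetric] qab_def[symmetric]
      by (simp add: algebra_simps power2_eq_square)
    with sum_lt have "((Re l)^2 + (Im l)^2) * (qa + qb) < 1 * (qa + qb)" by simp
    then have "(Re l)^2 + (Im l)^2 < 1"
      by (rule mult_right_less_imp_less) (use pos in simp)
    then show ?thesis by (simp add: cmod_def)
  qed
  have "rho F \<in> norm ` spectrum ?Fc" unfolding rho_def by (rule spectral_radius_mem_max(1)[OF Fc n])
  then show ?thesis using ev_lt unfolding spectrum_def by auto
qed



lemma smult_smult_mat': "a \<cdot>\<^sub>m (b \<cdot>\<^sub>m A) = (a * b) \<cdot>\<^sub>m (A :: 'a :: comm_ring_1 mat)"
  by (intro eq_matI, auto)

lemma pow_smult_mat: "A \<in> carrier_mat n n \<Longrightarrow> (c \<cdot>\<^sub>m A) ^\<^sub>m k = (c ^ k) \<cdot>\<^sub>m (A ^\<^sub>m k :: 'a :: comm_ring_1 mat)"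
proof (induct k)
  case 0 then show ?case by (intro eq_matI, auto)
next
  case (Suc k)
  then show ?case
    by (simp add: mult_smult_assoc_mat[of _ n n] mult_smult_distrib[of _ n n] smult_smult_mat' ac_simps)
qed

lemma decay:
  fixes F :: "real mat"
  assumes F: "F \<in> carrier_mat n n" and n: "0 < n" and r: "rho F < 1"
  shows "\<exists>K r. 0 < r \<and> r < 1 \<and> (\<forall>k i j. i < n \<longrightarrow> j < n \<longrightarrow> \<bar>(F ^\<^sub>m k) $$ (i,j)\<bar> \<le> K * r ^ k)"
proof -
  let ?Fc = "map_mat complex_of_real F"
  have Fc: "?Fc \<in> carrier_mat n n" using F by auto
  define r0 where "r0 = rho F"
  have r00: "0 \<le> r0"
  proof -
    have "rho F \<in> norm ` spectrum ?Fc" unfolding rho_def by (rule spectral_radius_mem_max(1)[OF Fc n])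
    then show ?thesis unfolding r0_def by auto
  qed
  define rr where "rr = (1 + r0) / 2"
  have rr: "0 < rr" "rr < 1" "r0 < rr" using r00 r unfolding rr_def r0_def by auto
  define c where "c = complex_of_real (1 / rr)"
  have c0: "c \<noteq> 0" using rr unfolding c_def by auto
  let ?A = "c \<cdot>\<^sub>m ?Fc"
  have A: "?A \<in> carrier_mat n n" using Fc by auto
  have ev_lt: "norm m < 1" if ev: "eigenvalue ?A m" for m
  proof -
    obtain v where v: "v \<in> carrier_vec n" "v \<noteq> 0\<^sub>v n" "?A *\<^sub>v v = m \<cdot>\<^sub>v v"
      using ev A unfolding eigenvalue_def eigenvector_def by auto
    have "?Fc *\<^sub>v v = (m / c) \<cdot>\<^sub>v v"
    proof -
      have "?Fc *\<^sub>v v = (1 / c) \<cdot>\<^sub>v (?A *\<^sub>v v)"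
        using c0 v(1) Fc by (simp add: smult_mat_mult_vec_gen[OF Fc v(1)] smult_smult_assoc)
      also have "\<dots> = (m / c) \<cdot>\<^sub>v v" unfolding v(3) by (simp add: smult_smult_assoc)
      finally show ?thesis .
    qed
    then have "eigenvalue ?Fc (m / c)" using v Fc unfolding eigenvalue_def eigenvector_def by auto
    then have "norm (m / c) \<le> r0" unfolding r0_def rho_def
      by (intro spectral_radius_mem_max(2)[OF Fc n], auto simp: spectrum_def)
    then have "norm m / norm c \<le> r0" by (simp add: norm_divide)
      moreover have "norm c = 1 / rr" using rr unfolding c_def by (simp add: norm_divide)
    ultimately have "norm m \<le> r0 / rr" using rr by (simp add: field_simps)
    also have "\<dots> < 1" using rr by simp
    finally show ?thesis .
  qed
  have "spectral_radius ?A \<in> norm ` spectrum ?A" by (rule spectral_radius_mem_max(1)[OF A n])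
  then have "spectral_radius ?A < 1" using ev_lt unfolding spectrum_def by auto
  from spectral_radius_jnf_norm_bound_less_1_upper_triangular[OF A this]
  obtain K where K: "\<And>k. norm_bound (?A ^\<^sub>m k) K" by auto
  have "\<bar>(F ^\<^sub>m k) $$ (i,j)\<bar> \<le> K * rr ^ k" if ij: "i < n" "j < n" for k i j
  proof -
    have "?A ^\<^sub>m k = (c ^ k) \<cdot>\<^sub>m map_mat complex_of_real (F ^\<^sub>m k)"
      by (simp add: pow_smult_mat[OF Fc] of_real_hom.mat_hom_pow[OF F])
    moreover have "norm ((?A ^\<^sub>m k) $$ (i,j)) \<le> K"
      using K[of k] ij A pow_carrier_mat[OF A, of k] unfolding norm_bound_def by (simp only: carrier_matD)
    ultimately have "norm ((c ^ k) * complex_of_real ((F ^\<^sub>m k) $$ (i,j))) \<le> K"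
      using ij F by simp
    then have "(1 / rr) ^ k * \<bar>(F ^\<^sub>m k) $$ (i,j)\<bar> \<le> K"
      using rr unfolding c_def by (simp add: norm_mult norm_power norm_divide)
    then show ?thesis using rr by (simp add: field_simps)
  qed
  then show ?thesis using rr by blast
qed



definition Tk :: "real mat \<Rightarrow> real mat \<Rightarrow> nat \<Rightarrow> real mat" where
  "Tk F X k = F ^\<^sub>m k * X * transpose_mat (F ^\<^sub>m k)"

definition Slim :: "nat \<Rightarrow> real mat \<Rightarrow> real mat \<Rightarrow> real mat" where
  "Slim n F X = mat n n (\<lambda>(i,j). \<Sum>k. Tk F X k $$ (i,j))"

lemma entry3: assumes A: "A \<in> carrier_mat n n" and X: "X \<in> carrier_mat n n" and i: "i < n" and j: "j < n"
  shows "(A * X * transpose_mat A) $$ (i,j) = (\<Sum>a<n. \<Sum>b<n. A $$ (i,a) * X $$ (a,b) * A $$ (j,b))"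
  using A X i j by (simp add: scalar_prod_def lessThan_atLeast0 sum_distrib_left mult.assoc)

lemma pow_mat_Suc_left: "A \<in> carrier_mat n n \<Longrightarrow> A ^\<^sub>m Suc k = A * A ^\<^sub>m k"
proof (induct k)
  case 0 then show ?case by simp
next
  case (Suc k)
  have "A ^\<^sub>m Suc (Suc k) = (A * A ^\<^sub>m k) * A" using Suc by simp
  also have "\<dots> = A * (A ^\<^sub>m k * A)" using Suc by (simp add: assoc_mult_mat[of _ n n _ n _ n])
  finally show ?case by simp
qed

lemma norm_bound_transpose: "norm_bound A b \<Longrightarrow> norm_bound (transpose_mat A) b"
  unfolding norm_bound_def by auto

context
  fixes n m :: nat and F H :: "real mat" and K r :: real
  assumes F: "F \<in> carrier_mat n n" and H: "H \<in> carrier_mat n m"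
    and r: "0 < r" "r < 1"
    and dec: "\<And>k i j. i < n \<Longrightarrow> j < n \<Longrightarrow> \<bar>(F ^\<^sub>m k) $$ (i,j)\<bar> \<le> K * r ^ k"
begin

lemma Tk_carrier: "X \<in> carrier_mat n n \<Longrightarrow> Tk F X k \<in> carrier_mat n n"
  unfolding Tk_def using F by auto

lemma Tk_0: "X \<in> carrier_mat n n \<Longrightarrow> Tk F X 0 = X"
  unfolding Tk_def using F by simp

lemma Tk_Suc: assumes X: "X \<in> carrier_mat n n" shows "Tk F X (Suc k) = F * Tk F X k * transpose_mat F"
proof -
  have Fk: "F ^\<^sub>m k \<in> carrier_mat n n" using F by simp
  have "Tk F X (Suc k) = (F * F ^\<^sub>m k) * X * (transpose_mat (F ^\<^sub>m k) * transpose_mat F)"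
    unfolding Tk_def pow_mat_Suc_left[OF F] using transpose_mult[OF F Fk] by simp
  also have "\<dots> = F * (F ^\<^sub>m k * X * transpose_mat (F ^\<^sub>m k)) * transpose_mat F"
  proof -
    have c1: "F * (F ^\<^sub>m k * X) \<in> carrier_mat n n" using mult_carrier_mat[OF F mult_carrier_mat[OF Fk X]] .
    have "(F * F ^\<^sub>m k) * X * (transpose_mat (F ^\<^sub>m k) * transpose_mat F)
       = (F * (F ^\<^sub>m k * X)) * (transpose_mat (F ^\<^sub>m k) * transpose_mat F)"
      using assoc_mult_mat[OF F Fk X] by simp
    also have "\<dots> = (F * (F ^\<^sub>m k * X)) * transpose_mat (F ^\<^sub>m k) * transpose_mat F"
      using assoc_mult_mat[OF c1, of "transpose_mat (F ^\<^sub>m k)" n "transpose_mat F" n] Fk F by simp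
    also have "(F * (F ^\<^sub>m k * X)) * transpose_mat (F ^\<^sub>m k) = F * ((F ^\<^sub>m k * X) * transpose_mat (F ^\<^sub>m k))"
      using assoc_mult_mat[OF F _ , of "F ^\<^sub>m k * X" n "transpose_mat (F ^\<^sub>m k)" n] Fk X by simp
    finally show ?thesis .
  qed
  finally show ?thesis unfolding Tk_def .
qed

lemma Tk_bound: assumes X: "X \<in> carrier_mat n n" and B: "\<And>a b. a < n \<Longrightarrow> b < n \<Longrightarrow> \<bar>X $$ (a,b)\<bar> \<le> B"
  and ij: "i < n" "j < n"
  shows "\<bar>Tk F X k $$ (i,j)\<bar> \<le> (K * K * B * real n * real n) * (r * r) ^ k"
proof -
  have Fk: "F ^\<^sub>m k \<in> carrier_mat n n" using F by simp
  have b1: "norm_bound (F ^\<^sub>m k) (K * r ^ k)" unfolding norm_bound_def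
  proof (intro allI impI)
    fix i j assume "i < dim_row (F ^\<^sub>m k)" "j < dim_col (F ^\<^sub>m k)"
    then have "i < n" "j < n" using Fk by auto
    then show "norm ((F ^\<^sub>m k) $$ (i, j)) \<le> K * r ^ k" using dec by simp
  qed
  have b2: "norm_bound X B" unfolding norm_bound_def using B X by simp
  have b3: "norm_bound (F ^\<^sub>m k * X) (K * r ^ k * B * real n)" by (rule norm_bound_mult[OF Fk X b1 b2])
  have b4: "norm_bound (F ^\<^sub>m k * X * transpose_mat (F ^\<^sub>m k)) (K * r ^ k * B * real n * (K * r ^ k) * real n)"
    by (rule norm_bound_mult[OF _ _ b3 norm_bound_transpose[OF b1]], insert Fk X, auto)
  then have "\<bar>Tk F X k $$ (i,j)\<bar> \<le> K * r ^ k * B * real n * (K * r ^ k) * real n"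
    unfolding norm_bound_def Tk_def using ij Fk X by auto
  also have "\<dots> = (K * K * B * real n * real n) * (r * r) ^ k" by (simp add: power_mult_distrib algebra_simps)
  finally show ?thesis .
qed

lemma mat_bound: "(X :: real mat) \<in> carrier_mat n n \<Longrightarrow> \<exists>B. \<forall>a b. a < n \<longrightarrow> b < n \<longrightarrow> \<bar>X $$ (a,b)\<bar> \<le> B"
proof -
  let ?B = "\<Sum>a<n. \<Sum>b<n. \<bar>X $$ (a,b)\<bar>"
  have "\<bar>X $$ (a,b)\<bar> \<le> ?B" if "a < n" "b < n" for a b
  proof -
    have "\<bar>X $$ (a,b)\<bar> \<le> (\<Sum>b<n. \<bar>X $$ (a,b)\<bar>)"
      by (rule member_le_sum[of b "{..<n}" "\<lambda>b. \<bar>X $$ (a,b)\<bar>"], insert that, auto)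
    also have "\<dots> \<le> ?B"
      by (rule member_le_sum[of a "{..<n}" "\<lambda>a. \<Sum>b<n. \<bar>X $$ (a,b)\<bar>"], insert that, auto intro: sum_nonneg)
    finally show ?thesis .
  qed
  then show ?thesis by blast
qed

lemma Tk_summable: assumes X: "X \<in> carrier_mat n n" and ij: "i < n" "j < n"
  shows "summable (\<lambda>k. Tk F X k $$ (i,j))"
proof -
  obtain B where B: "\<And>a b. a < n \<Longrightarrow> b < n \<Longrightarrow> \<bar>X $$ (a,b)\<bar> \<le> B" using mat_bound[OF X] by auto
  have g: "summable (\<lambda>k. (K * K * B * real n * real n) * (r * r) ^ k)"
    by (rule summable_mult, rule summable_geometric, insert r, simp add: abs_mult, metis mult_less_cancel_left_pos mult.right_neutral less_trans)
  show ?thesis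
    by (rule summable_comparison_test'[OF g], unfold real_norm_def, rule Tk_bound[OF X B ij])
qed

lemma Slim_carrier: "Slim n F X \<in> carrier_mat n n" unfolding Slim_def by simp

lemma Slim_eq: assumes X: "X \<in> carrier_mat n n"
  shows "Slim n F X = F * Slim n F X * transpose_mat F + X"
proof (rule eq_matI)
  fix i j assume "i < dim_row (F * Slim n F X * transpose_mat F + X)" "j < dim_col (F * Slim n F X * transpose_mat F + X)"
  then have ij: "i < n" "j < n" using F X by auto
  let ?f = "\<lambda>k. Tk F X k $$ (i,j)"
  have sm: "summable ?f" by (rule Tk_summable[OF X ij])
  have "(F * Slim n F X * transpose_mat F) $$ (i,j) = (\<Sum>a<n. \<Sum>b<n. F $$ (i,a) * (\<Sum>k. Tk F X k $$ (a,b)) * F $$ (j,b))"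
    by (subst entry3[OF F Slim_carrier ij], simp add: Slim_def)
  also have "\<dots> = (\<Sum>a<n. \<Sum>b<n. \<Sum>k. F $$ (i,a) * Tk F X k $$ (a,b) * F $$ (j,b))"
  proof (intro sum.cong refl)
    fix a b assume "a \<in> {..<n}" "b \<in> {..<n}"
    then have s: "summable (\<lambda>k. Tk F X k $$ (a,b))" using Tk_summable[OF X] by auto
    show "F $$ (i,a) * (\<Sum>k. Tk F X k $$ (a,b)) * F $$ (j,b) = (\<Sum>k. F $$ (i,a) * Tk F X k $$ (a,b) * F $$ (j,b))"
      using suminf_mult2[OF summable_mult[OF s, of "F $$ (i,a)"], of "F $$ (j,b)"]
        suminf_mult[OF s, of "F $$ (i,a)"] by simp
  qed
  also have "\<dots> = (\<Sum>k. \<Sum>a<n. \<Sum>b<n. F $$ (i,a) * Tk F X k $$ (a,b) * F $$ (j,b))"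
  proof -
    have s: "summable (\<lambda>k. F $$ (i,a) * Tk F X k $$ (a,b) * F $$ (j,b))" if "a < n" "b < n" for a b
      using summable_mult2[OF summable_mult[OF Tk_summable[OF X that], of "F $$ (i,a)"], of "F $$ (j,b)"] by simp
    have s2: "summable (\<lambda>k. \<Sum>b<n. F $$ (i,a) * Tk F X k $$ (a,b) * F $$ (j,b))" if "a < n" for a
      by (rule summable_sum, rule s, insert that, auto)
    have "(\<Sum>k. \<Sum>a<n. \<Sum>b<n. F $$ (i,a) * Tk F X k $$ (a,b) * F $$ (j,b))
       = (\<Sum>a<n. \<Sum>k. \<Sum>b<n. F $$ (i,a) * Tk F X k $$ (a,b) * F $$ (j,b))"
      by (rule suminf_sum, rule s2, simp)
    also have "\<dots> = (\<Sum>a<n. \<Sum>b<n. \<Sum>k. F $$ (i,a) * Tk F X k $$ (a,b) * F $$ (j,b))"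
      by (rule sum.cong[OF refl], rule suminf_sum, rule s, auto)
    finally show ?thesis by simp
  qed
  also have "\<dots> = (\<Sum>k. ?f (Suc k))"
    by (rule arg_cong[where f = suminf], rule ext, subst Tk_Suc[OF X], subst entry3[OF F Tk_carrier[OF X] ij], simp)
  also have "\<dots> = (\<Sum>k. ?f k) - X $$ (i,j)" using suminf_split_head[OF sm] Tk_0[OF X] by simp
  finally show "Slim n F X $$ (i,j) = (F * Slim n F X * transpose_mat F + X) $$ (i,j)"
    using ij F X by (simp add: Slim_def)
qed (use F X in \<open>auto simp: Slim_def\<close>)

lemma Lyap_unique: assumes X: "X \<in> carrier_mat n n" and S: "S \<in> carrier_mat n n"
  and eq: "S = F * S * transpose_mat F + X"
  shows "S = Slim n F X"
proof -
  define D where "D = S - Slim n F X"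
  have Dc: "D \<in> carrier_mat n n" unfolding D_def using S Slim_carrier by (simp add: minus_carrier_mat)
  have Ft: "transpose_mat F \<in> carrier_mat n n" using F by simp
  have DF: "D = F * D * transpose_mat F"
  proof -
    have "D = (F * S * transpose_mat F + X) - (F * Slim n F X * transpose_mat F + X)"
      unfolding D_def using eq Slim_eq[OF X] by simp
    also have "\<dots> = F * S * transpose_mat F - F * Slim n F X * transpose_mat F"
      using F S X Slim_carrier by (intro eq_matI, auto)
    also have "\<dots> = F * D * transpose_mat F"
      unfolding D_def using F S Slim_carrier
      by (simp add: mult_minus_distrib_mat[of _ n n] minus_mult_distrib_mat[of _ n n])
    finally show ?thesis .
  qed
  have Dk: "D = Tk F D k" for k
  proof (induct k)
    case 0 then show ?case using Tk_0[OF Dc] by simp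
  next
    case (Suc k)
    then show ?case using Tk_Suc[OF Dc, of k] DF by simp
  qed
  obtain B where B: "\<And>a b. a < n \<Longrightarrow> b < n \<Longrightarrow> \<bar>D $$ (a,b)\<bar> \<le> B" using mat_bound[OF Dc] by auto
  have D0: "D $$ (i,j) = 0" if ij: "i < n" "j < n" for i j
  proof (rule ccontr)
    assume ne: "D $$ (i,j) \<noteq> 0"
    define Cc where "Cc = K * K * B * real n * real n"
    have bd: "\<bar>D $$ (i,j)\<bar> \<le> Cc * (r * r) ^ k" for k
      using Tk_bound[OF Dc B ij, of k] Dk[of k] unfolding Cc_def by simp
    have Cpos: "0 < Cc" using bd[of 0] ne by simp
    have "r * r < 1" using r by (metis mult_less_cancel_left_pos mult.right_neutral less_trans)
    from real_arch_pow_inv[OF _ this, of "\<bar>D $$ (i,j)\<bar> / Cc"] ne Cpos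
    obtain k where "(r * r) ^ k < \<bar>D $$ (i,j)\<bar> / Cc" by auto
    then have "Cc * (r * r) ^ k < \<bar>D $$ (i,j)\<bar>" using Cpos by (simp add: field_simps)
    with bd[of k] show False by simp
  qed
  have "D = 0\<^sub>m n n" by (rule eq_matI, insert Dc D0, auto)
  then show ?thesis unfolding D_def using S Slim_carrier
    by (metis Dc minus_add_uminus_mat minus_r_inv_mat right_add_zero_mat uminus_carrier_mat add_uminus_minus_mat
      assoc_add_mat comm_add_mat)
qed


lemma qf_sum: assumes A: "A \<in> carrier_mat n n" and v: "v \<in> carrier_vec n"
  shows "v \<bullet> (A *\<^sub>v v) = (\<Sum>i<n. \<Sum>j<n. v $ i * A $$ (i,j) * v $ j)"
  using A v by (simp add: scalar_prod_def lessThan_atLeast0 sum_distrib_left mult.assoc)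

definition qk :: "nat \<Rightarrow> real vec \<Rightarrow> real" where
  "qk k v = (transpose_mat H *\<^sub>v (transpose_mat (F ^\<^sub>m k) *\<^sub>v v)) \<bullet> (transpose_mat H *\<^sub>v (transpose_mat (F ^\<^sub>m k) *\<^sub>v v))"

lemma qk_Tk: assumes v: "v \<in> carrier_vec n" shows "v \<bullet> (Tk F (H * transpose_mat H) k *\<^sub>v v) = qk k v"
proof -
  have Fk: "F ^\<^sub>m k \<in> carrier_mat n n" using F by simp
  have w: "transpose_mat (F ^\<^sub>m k) *\<^sub>v v \<in> carrier_vec n" using Fk v by simp
  have "Tk F (H * transpose_mat H) k *\<^sub>v v = F ^\<^sub>m k *\<^sub>v (H *\<^sub>v (transpose_mat H *\<^sub>v (transpose_mat (F ^\<^sub>m k) *\<^sub>v v)))"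
    unfolding Tk_def using Fk H v
    by (simp add: assoc_mult_mat_vec[of "F ^\<^sub>m k * (H * transpose_mat H)" n n "transpose_mat (F ^\<^sub>m k)" n v]
      assoc_mult_mat_vec[of "F ^\<^sub>m k" n n "H * transpose_mat H" n] assoc_mult_mat_vec[of H n m "transpose_mat H" n])
  then have "v \<bullet> (Tk F (H * transpose_mat H) k *\<^sub>v v) = (transpose_mat (F ^\<^sub>m k) *\<^sub>v v) \<bullet> (H *\<^sub>v (transpose_mat H *\<^sub>v (transpose_mat (F ^\<^sub>m k) *\<^sub>v v)))"
    using transpose_vec_mult_scalar[OF Fk _ v, of "H *\<^sub>v (transpose_mat H *\<^sub>v (transpose_mat (F ^\<^sub>m k) *\<^sub>v v))"] H Fk v
    by (simp add: comm_scalar_prod[of v n])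
  also have "\<dots> = qk k v" unfolding qk_def
    using transpose_vec_mult_scalar[OF H _ w, of "transpose_mat H *\<^sub>v (transpose_mat (F ^\<^sub>m k) *\<^sub>v v)"] H w
    by (simp add: comm_scalar_prod[of _ n])
  finally show ?thesis .
qed

lemma qk_nonneg: "0 \<le> qk k v" unfolding qk_def by (simp add: scalar_prod_def sum_nonneg)

lemma qk_Suc: assumes v: "v \<in> carrier_vec n" shows "qk (Suc k) v = qk k (transpose_mat F *\<^sub>v v)"
proof -
  have Fk: "F ^\<^sub>m k \<in> carrier_mat n n" using F by simp
  have "transpose_mat (F ^\<^sub>m Suc k) *\<^sub>v v = transpose_mat (F ^\<^sub>m k) *\<^sub>v (transpose_mat F *\<^sub>v v)"
    unfolding pow_mat_Suc_left[OF F] transpose_mult[OF F Fk] using F Fk v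
    by (simp add: assoc_mult_mat_vec[of "transpose_mat (F ^\<^sub>m k)" n n "transpose_mat F" n v])
  then show ?thesis unfolding qk_def by simp
qed

lemma HH_carrier: "H * transpose_mat H \<in> carrier_mat n n" using H by simp

lemma Slim_qf: assumes v: "v \<in> carrier_vec n"
  shows "summable (\<lambda>k. qk k v)" "v \<bullet> (Slim n F (H * transpose_mat H) *\<^sub>v v) = (\<Sum>k. qk k v)"
proof -
  let ?X = "H * transpose_mat H"
  have s: "summable (\<lambda>k. v $ i * Tk F ?X k $$ (i,j) * v $ j)" if "i < n" "j < n" for i j
    using summable_mult2[OF summable_mult[OF Tk_summable[OF HH_carrier that], of "v $ i"], of "v $ j"] by simp
  have s2: "summable (\<lambda>k. \<Sum>j<n. v $ i * Tk F ?X k $$ (i,j) * v $ j)" if "i < n" for i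
    by (rule summable_sum, rule s, insert that, auto)
  have eq: "qk k v = (\<Sum>i<n. \<Sum>j<n. v $ i * Tk F ?X k $$ (i,j) * v $ j)" for k
    using qk_Tk[OF v, of k] qf_sum[OF Tk_carrier[OF HH_carrier] v] by simp
  show "summable (\<lambda>k. qk k v)" unfolding eq
    by (rule summable_sum, rule s2, simp)
  have "v \<bullet> (Slim n F ?X *\<^sub>v v) = (\<Sum>i<n. \<Sum>j<n. v $ i * (\<Sum>k. Tk F ?X k $$ (i,j)) * v $ j)"
    using qf_sum[OF Slim_carrier v] by (simp add: Slim_def)
  also have "\<dots> = (\<Sum>i<n. \<Sum>j<n. \<Sum>k. v $ i * Tk F ?X k $$ (i,j) * v $ j)"
  proof (intro sum.cong refl)
    fix a b assume "a \<in> {..<n}" "b \<in> {..<n}"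
    then have s: "summable (\<lambda>k. Tk F ?X k $$ (a,b))" using Tk_summable[OF HH_carrier] by auto
    show "v $ a * (\<Sum>k. Tk F ?X k $$ (a,b)) * v $ b = (\<Sum>k. v $ a * Tk F ?X k $$ (a,b) * v $ b)"
      using suminf_mult2[OF summable_mult[OF s, of "v $ a"], of "v $ b"]
        suminf_mult[OF s, of "v $ a"] by simp
  qed
  also have "\<dots> = (\<Sum>k. \<Sum>i<n. \<Sum>j<n. v $ i * Tk F ?X k $$ (i,j) * v $ j)"
  proof -
    have "(\<Sum>k. \<Sum>i<n. \<Sum>j<n. v $ i * Tk F ?X k $$ (i,j) * v $ j)
       = (\<Sum>i<n. \<Sum>k. \<Sum>j<n. v $ i * Tk F ?X k $$ (i,j) * v $ j)"
      by (rule suminf_sum, rule s2, simp)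
    also have "\<dots> = (\<Sum>i<n. \<Sum>j<n. \<Sum>k. v $ i * Tk F ?X k $$ (i,j) * v $ j)"
      by (rule sum.cong[OF refl], rule suminf_sum, rule s, auto)
    finally show ?thesis by simp
  qed
  finally show "v \<bullet> (Slim n F ?X *\<^sub>v v) = (\<Sum>k. qk k v)" unfolding eq .
qed

lemma Slim_nonneg: "v \<in> carrier_vec n \<Longrightarrow> 0 \<le> v \<bullet> (Slim n F (H * transpose_mat H) *\<^sub>v v)"
  using Slim_qf[of v] qk_nonneg by (simp add: suminf_nonneg)

lemma Slim_le: assumes Pinv: "Pinv \<in> carrier_mat n n"
  and Pinv0: "\<And>v. v \<in> carrier_vec n \<Longrightarrow> 0 \<le> v \<bullet> (Pinv *\<^sub>v v)"
  and step: "\<And>v. v \<in> carrier_vec n \<Longrightarrow> qk 0 v + (transpose_mat F *\<^sub>v v) \<bullet> (Pinv *\<^sub>v (transpose_mat F *\<^sub>v v)) \<le> v \<bullet> (Pinv *\<^sub>v v)"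
  and v: "v \<in> carrier_vec n"
  shows "v \<bullet> (Slim n F (H * transpose_mat H) *\<^sub>v v) \<le> v \<bullet> (Pinv *\<^sub>v v)"
proof -
  have part: "(\<Sum>k<N. qk k v) \<le> v \<bullet> (Pinv *\<^sub>v v)" if "v \<in> carrier_vec n" for N v
    using that
  proof (induct N arbitrary: v)
    case 0 then show ?case using Pinv0 by simp
  next
    case (Suc N)
    have Fv: "transpose_mat F *\<^sub>v v \<in> carrier_vec n" using F Suc(2) by simp
    have "(\<Sum>k<Suc N. qk k v) = qk 0 v + (\<Sum>k<N. qk (Suc k) v)" by (rule sum.lessThan_Suc_shift)
    also have "\<dots> = qk 0 v + (\<Sum>k<N. qk k (transpose_mat F *\<^sub>v v))" using qk_Suc[OF Suc(2)] by simp
    also have "\<dots> \<le> qk 0 v + (transpose_mat F *\<^sub>v v) \<bullet> (Pinv *\<^sub>v (transpose_mat F *\<^sub>v v))"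
      using Suc(1)[OF Fv] by simp
    also have "\<dots> \<le> v \<bullet> (Pinv *\<^sub>v v)" by (rule step[OF Suc(2)])
    finally show ?case .
  qed
  show ?thesis unfolding Slim_qf(2)[OF v]
    by (rule suminf_le_const[OF Slim_qf(1)[OF v] part[OF v]])
qed

lemma Slim_sym: "transpose_mat (Slim n F (H * transpose_mat H)) = Slim n F (H * transpose_mat H)"
proof -
  have "transpose_mat (Tk F (H * transpose_mat H) k) = Tk F (H * transpose_mat H) k" for k
  proof -
    have Fk: "F ^\<^sub>m k \<in> carrier_mat n n" using F by simp
    show ?thesis unfolding Tk_def using Fk H
      by (simp add: transpose_mult[of "F ^\<^sub>m k" n n "H * (transpose_mat H * transpose_mat (F ^\<^sub>m k))" n]
        transpose_mult[of H n m "transpose_mat H * transpose_mat (F ^\<^sub>m k)" n]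
        transpose_mult[of "transpose_mat H" m n "transpose_mat (F ^\<^sub>m k)" n]
        assoc_mult_mat[of "F ^\<^sub>m k" n n H m "transpose_mat H" n]
        assoc_mult_mat[of "F ^\<^sub>m k" n n "H * transpose_mat H" n "transpose_mat (F ^\<^sub>m k)" n]
        assoc_mult_mat[of H n m "transpose_mat H" n "transpose_mat (F ^\<^sub>m k)" n])
  qed
  then have "Tk F (H * transpose_mat H) k $$ (j,i) = Tk F (H * transpose_mat H) k $$ (i,j)" if "i < n" "j < n" for i j k
    using that Tk_carrier[OF HH_carrier, of k] by (metis carrier_matD index_transpose_mat(1))
  then show ?thesis by (intro eq_matI, auto simp: Slim_def)
qed

end


lemma mat_inv_ok: fixes A :: "real mat"
  assumes A: "A \<in> carrier_mat n n" and ker: "\<And>v. v \<in> carrier_vec n \<Longrightarrow> A *\<^sub>v v = 0\<^sub>v n \<Longrightarrow> v = 0\<^sub>v n"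
  shows "A * the (mat_inverse A) = 1\<^sub>m n" "the (mat_inverse A) * A = 1\<^sub>m n" "the (mat_inverse A) \<in> carrier_mat n n"
proof -
  have "det A \<noteq> 0" using det_0_iff_vec_prod_zero_field[OF A] ker by auto
  then have U: "A \<in> Units (ring_mat TYPE(real) n n)" by (rule det_non_zero_imp_unit[OF A])
  have "mat_inverse A \<noteq> None" using mat_inverse(1)[OF A] U by metis
  then obtain B where B: "mat_inverse A = Some B" by auto
  from mat_inverse(2)[OF A B]
  show "A * the (mat_inverse A) = 1\<^sub>m n" "the (mat_inverse A) * A = 1\<^sub>m n" "the (mat_inverse A) \<in> carrier_mat n n"
    using B by auto
qed

lemma pd_ker: assumes P: "pd_mat n P" and v: "v \<in> carrier_vec n" and Pv: "P *\<^sub>v v = 0\<^sub>v n"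
  shows "v = 0\<^sub>v n"
proof (rule ccontr)
  assume "v \<noteq> 0\<^sub>v n"
  then have "0 < v \<bullet> (P *\<^sub>v v)" using pd_pos[OF P v] by auto
  then show False using Pv v by simp
qed

lemma invertible_ker: fixes S :: "real mat"
  assumes S: "S \<in> carrier_mat n n" and inv: "invertible_mat S" and v: "v \<in> carrier_vec n" and Sv: "S *\<^sub>v v = 0\<^sub>v n"
  shows "v = 0\<^sub>v n"
proof -
  obtain B where B1: "S * B = 1\<^sub>m n" and B2: "B * S = 1\<^sub>m (dim_row B)"
    using inv S unfolding invertible_mat_def inverts_mat_def by auto
  have "dim_col B = n" using arg_cong[OF B1, of dim_col] by simp
  moreover have "dim_row B = n" using arg_cong[OF B2, of dim_col] S by simp
  ultimately have Bc: "B \<in> carrier_mat n n" by auto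
  have "v = (B * S) *\<^sub>v v" using B2 Bc v by simp
  also have "\<dots> = B *\<^sub>v (S *\<^sub>v v)" using Bc S v by simp
  also have "\<dots> = 0\<^sub>v n" using Sv Bc by simp
  finally show ?thesis .
qed

lemma inv_sym: fixes S Si :: "real mat"
  assumes S: "S \<in> carrier_mat n n" and Si: "Si \<in> carrier_mat n n" and sym: "transpose_mat S = S"
   and i1: "S * Si = 1\<^sub>m n" and i2: "Si * S = 1\<^sub>m n"
  shows "transpose_mat Si = Si"
proof -
  have "transpose_mat Si = transpose_mat Si * (S * Si)" using i1 Si by simp
  also have "\<dots> = (transpose_mat Si * S) * Si" using S Si by (simp add: assoc_mult_mat[of _ n n _ n _ n])
  also have "transpose_mat Si * S = transpose_mat (S * Si)"
    using transpose_mult[OF S Si] sym by simp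
  also have "\<dots> = 1\<^sub>m n" using i1 by simp
  finally show ?thesis using Si by simp
qed

lemma append_zero_iff: assumes a: "a \<in> carrier_vec n1" and b: "b \<in> carrier_vec n2"
  shows "(a @\<^sub>v b = 0\<^sub>v (n1 + n2)) = (a = 0\<^sub>v n1 \<and> b = (0\<^sub>v n2 :: 'a :: zero vec))"
proof -
  have "0\<^sub>v (n1 + n2) = 0\<^sub>v n1 @\<^sub>v (0\<^sub>v n2 :: 'a vec)" by (intro eq_vecI, auto)
  then show ?thesis using append_vec_eq[OF a, of "0\<^sub>v n1" b "0\<^sub>v n2"] by simp
qed



lemma transpose_smult_mat: "transpose_mat (c \<cdot>\<^sub>m A) = c \<cdot>\<^sub>m transpose_mat (A :: real mat)"
  by (intro eq_matI, auto)

lemma trip_carrier: "T \<in> carrier_mat a b \<Longrightarrow> M \<in> carrier_mat a a \<Longrightarrow> transpose_mat T * M * T \<in> carrier_mat b b"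
  by simp

lemma trip_sym: fixes T M :: "real mat"
  assumes T: "T \<in> carrier_mat a b" and M: "M \<in> carrier_mat a a" and sym: "transpose_mat M = M"
  shows "transpose_mat (transpose_mat T * M * T) = transpose_mat T * M * T"
proof -
  have c: "transpose_mat T * M \<in> carrier_mat b a" using T M by simp
  have "transpose_mat (transpose_mat T * M * T) = transpose_mat T * transpose_mat (transpose_mat T * M)"
    using transpose_mult[OF c T] by simp
  also have "transpose_mat (transpose_mat T * M) = transpose_mat M * T"
    using transpose_mult[of "transpose_mat T" b a M a] T M by simp
  also have "transpose_mat T * (transpose_mat M * T) = transpose_mat T * M * T"
    using sym assoc_mult_mat[of "transpose_mat T" b a M a T b] T M by simp
  finally show ?thesis .
qed

lemma trip_qf: fixes T M :: "real mat"
  assumes T: "T \<in> carrier_mat a b" and M: "M \<in> carrier_mat a a" and x: "x \<in> carrier_vec b"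
  shows "x \<bullet> ((transpose_mat T * M * T) *\<^sub>v x) = (T *\<^sub>v x) \<bullet> (M *\<^sub>v (T *\<^sub>v x))"
proof -
  have "(transpose_mat T * M * T) *\<^sub>v x = transpose_mat T *\<^sub>v (M *\<^sub>v (T *\<^sub>v x))"
    using T M x by (simp add: assoc_mult_mat_vec[of "transpose_mat T" b a "M * T" b x] assoc_mult_mat_vec[of M a a T b x])
  then show ?thesis using tr_move[OF T x, of "M *\<^sub>v (T *\<^sub>v x)"] T M x
    comm_scalar_prod[OF mult_mat_vec_carrier[OF M mult_mat_vec_carrier[OF T x]] mult_mat_vec_carrier[OF T x]] by simp
qed

lemma minus_smult_qf: fixes A B :: "real mat"
  assumes A: "A \<in> carrier_mat n n" and B: "B \<in> carrier_mat n n" and x: "x \<in> carrier_vec n"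
  shows "x \<bullet> ((c \<cdot>\<^sub>m A - d \<cdot>\<^sub>m B) *\<^sub>v x) = c * (x \<bullet> (A *\<^sub>v x)) - d * (x \<bullet> (B *\<^sub>v x))"
  using assms by (simp add: minus_mult_distrib_mat_vec[of _ n n] scalar_prod_minus_distrib[of x] )


theorem theorem2:
  fixes nx ny nw na nr :: nat
    and A C Bw Dw W RW P Zt G Y :: "real mat"
    and j :: "nat \<Rightarrow> nat"
    and gamma mu :: real
  assumes nx_pos: "0 < nx"
    and A: "A \<in> carrier_mat nx nx" and C: "C \<in> carrier_mat ny nx"
    and Bw: "Bw \<in> carrier_mat nx nw" and Dw: "Dw \<in> carrier_mat ny nw"
    and det: "detectable nx ny A C" and stab: "stabilizable nx nw A Bw"
    and j_mono: "\<And>a b. a < b \<Longrightarrow> b < na \<Longrightarrow> j a < j b"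
    and j_bound: "\<And>a. a < na \<Longrightarrow> j a < ny"
    and W: "psd_mat ny W"
    and gamma: "0 < gamma"
    and RW: "RW \<in> carrier_mat nr ny" and W_fact: "W = transpose_mat RW * RW"
    and mu: "0 < mu"
    and P: "pd_mat nx P" and Zt: "pd_mat ny Zt"
    and G: "G \<in> carrier_mat nx ny" and Y: "Y \<in> carrier_mat ny na"
    and LMI1: "pd_mat (nx + nx + nw)
       (sym3 P (P * A - G * C) (P * Bw - G * Dw) P (0\<^sub>m nx nw) (1\<^sub>m nw))"
    and LMI2: "pd_mat (ny + nx + nw)
       (sym3 Zt (Zt * C) (Zt * Dw) P (0\<^sub>m nx nw) (1\<^sub>m nw))"
    and LMI3: "psd_mat (na + nr + (nx + nx + nw + nr))
       (let Da = attack_mat ny na j;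
            M = four_block_mat (transpose_mat Y * Da + transpose_mat Da * Y)
                  (transpose_mat Da * transpose_mat RW) (RW * Da) ((2 * mu) \<cdot>\<^sub>m 1\<^sub>m nr);
            Gamma1 = hcat (hcat (transpose_mat Y * C) (transpose_mat Da * transpose_mat G))
                          (transpose_mat Y * Dw);
            Gamma2 = bdiag (bdiag ((1 / (2 + 1 / gamma)) \<cdot>\<^sub>m P) ((1 / gamma) \<cdot>\<^sub>m P))
                           ((1 / 2) \<cdot>\<^sub>m 1\<^sub>m nw);
            N = bdiag Gamma1 (mu \<cdot>\<^sub>m 1\<^sub>m nr);
            Q = bdiag Gamma2 (mu \<cdot>\<^sub>m 1\<^sub>m nr)
        in four_block_mat M N (transpose_mat N) Q)"
    and Sigma_inv: "invertible_mat (Sigma_rw nx A C Bw Dw (the (mat_inverse P) * G))"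
  shows "let L = the (mat_inverse P) * G; lambda = 1 / mu; Da = attack_mat ny na j;
             S = Sigma_rw nx A C Bw Dw L;
             T = (1\<^sub>m ny - C * L) * Da
         in rho (A - L * C) < 1 \<and>
            psd_mat na ((1 / 2) \<cdot>\<^sub>m (transpose_mat T * the (mat_inverse S) * T)
                        - lambda \<cdot>\<^sub>m (transpose_mat Da * W * Da))"

proof -
  have Pc: "P \<in> carrier_mat nx nx" and Psym: "transpose_mat P = P" using P unfolding pd_mat_def by auto
  define Pinv where "Pinv = the (mat_inverse P)"
  have PP: "P * Pinv = 1\<^sub>m nx" "Pinv * P = 1\<^sub>m nx" "Pinv \<in> carrier_mat nx nx"
    unfolding Pinv_def by (rule mat_inv_ok[OF Pc pd_ker[OF P]], assumption+)+
  have Pic: "Pinv \<in> carrier_mat nx nx" by (rule PP(3))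
  have PPv: "P *\<^sub>v (Pinv *\<^sub>v z) = z" if "z \<in> carrier_vec nx" for z
    using PP(1) Pc Pic that by (metis assoc_mult_mat_vec one_mult_mat_vec)
  define L where "L = Pinv * G"
  have Lc: "L \<in> carrier_mat nx ny" unfolding L_def using Pic G by simp
  have PL: "P * L = G" unfolding L_def using PP(1) Pc Pic G
    by (metis assoc_mult_mat left_mult_one_mat)
  define F where "F = A - L * C"
  define H where "H = Bw - L * Dw"
  have Fc: "F \<in> carrier_mat nx nx" unfolding F_def using A Lc C by (simp add: minus_carrier_mat)
  have Hc: "H \<in> carrier_mat nx nw" unfolding H_def using Bw Lc Dw by (simp add: minus_carrier_mat)
  have PF: "P * A - G * C = P * F"
    unfolding F_def PL[symmetric] using Pc A Lc C
    by (simp add: mult_minus_distrib_mat[of P nx nx] assoc_mult_mat[of P nx nx L ny C nx])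
  have PH: "P * Bw - G * Dw = P * H"
    unfolding H_def PL[symmetric] using Pc Bw Lc Dw
    by (simp add: mult_minus_distrib_mat[of P nx nx] assoc_mult_mat[of P nx nx L ny Dw nw])
  have LY: "(F *\<^sub>v y + H *\<^sub>v w) \<bullet> (P *\<^sub>v (F *\<^sub>v y + H *\<^sub>v w))
      \<le> y \<bullet> (P *\<^sub>v y) + w \<bullet> w
      \<and> ((y \<noteq> 0\<^sub>v nx \<or> w \<noteq> 0\<^sub>v nw) \<longrightarrow> (F *\<^sub>v y + H *\<^sub>v w) \<bullet> (P *\<^sub>v (F *\<^sub>v y + H *\<^sub>v w)) < y \<bullet> (P *\<^sub>v y) + w \<bullet> w)"
    if y: "y \<in> carrier_vec nx" and w: "w \<in> carrier_vec nw" for y w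
  proof -
    define u where "u = F *\<^sub>v y + H *\<^sub>v w"
    have u: "u \<in> carrier_vec nx" unfolding u_def using Fc Hc y w by simp
    define x where "x = - u"
    have x: "x \<in> carrier_vec nx" unfolding x_def using u by simp
    let ?M = "sym3 P (P * F) (P * H) P (0\<^sub>m nx nw) (1\<^sub>m nw)"
    have q: "((x @\<^sub>v y) @\<^sub>v w) \<bullet> (?M *\<^sub>v ((x @\<^sub>v y) @\<^sub>v w)) = y \<bullet> (P *\<^sub>v y) + w \<bullet> w - u \<bullet> (P *\<^sub>v u)"
    proof -
      have "((x @\<^sub>v y) @\<^sub>v w) \<bullet> (?M *\<^sub>v ((x @\<^sub>v y) @\<^sub>v w)) =
        x \<bullet> (P *\<^sub>v x) + 2 * (x \<bullet> ((P * F) *\<^sub>v y)) + 2 * (x \<bullet> ((P * H) *\<^sub>v w)) + y \<bullet> (P *\<^sub>v y)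
        + 2 * (y \<bullet> (0\<^sub>m nx nw *\<^sub>v w)) + w \<bullet> (1\<^sub>m nw *\<^sub>v w)"
        by (rule qf_sym3, insert Pc Fc Hc x y w, auto)
      also have "\<dots> = x \<bullet> (P *\<^sub>v x) + 2 * (x \<bullet> (P *\<^sub>v u)) + y \<bullet> (P *\<^sub>v y) + w \<bullet> w"
        unfolding u_def using Pc Fc Hc x y w
        by (simp add: mult_add_distrib_mat_vec[of P nx nx] scalar_prod_add_distrib[of x nx] algebra_simps)
      also have "\<dots> = y \<bullet> (P *\<^sub>v y) + w \<bullet> w - u \<bullet> (P *\<^sub>v u)"
      proof -
        have "P *\<^sub>v (- u) = - (P *\<^sub>v u)" by (intro eq_vecI, insert Pc u, auto)
        then show ?thesis unfolding x_def using Pc u by simp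
      qed
      finally show ?thesis .
    qed
    have M1: "?M = sym3 P (P * A - G * C) (P * Bw - G * Dw) P (0\<^sub>m nx nw) (1\<^sub>m nw)" unfolding PF PH ..
    have V: "(x @\<^sub>v y) @\<^sub>v w \<in> carrier_vec (nx + nx + nw)" using x y w by auto
    have strict: "0 < ((x @\<^sub>v y) @\<^sub>v w) \<bullet> (?M *\<^sub>v ((x @\<^sub>v y) @\<^sub>v w))" if ne: "y \<noteq> 0\<^sub>v nx \<or> w \<noteq> 0\<^sub>v nw"
    proof -
      have "(x @\<^sub>v y) @\<^sub>v w \<noteq> 0\<^sub>v (nx + nx + nw)"
        using append_zero_iff[of "x @\<^sub>v y" "nx + nx" w nw] append_zero_iff[OF x y] x y w ne by auto
      then show ?thesis using LMI1 V unfolding M1 pd_mat_def by auto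
    qed
    show ?thesis
    proof (cases "y = 0\<^sub>v nx \<and> w = 0\<^sub>v nw")
      case True
      then show ?thesis using Fc Hc Pc by simp
    next
      case False
      with strict q show ?thesis unfolding u_def[symmetric] by auto
    qed
  qed
  have rhoF: "rho F < 1"
  proof (rule lyap_rho[OF Fc P nx_pos])
    fix y :: "real vec" assume y: "y \<in> carrier_vec nx" and ne: "y \<noteq> 0\<^sub>v nx"
    have "H *\<^sub>v 0\<^sub>v nw = 0\<^sub>v nx" using Hc by simp
    then show "(F *\<^sub>v y) \<bullet> (P *\<^sub>v (F *\<^sub>v y)) < y \<bullet> (P *\<^sub>v y)"
      using LY[OF y zero_carrier_vec[of nw]] ne Fc y by simp
  qed
  obtain K r where r: "0 < r" "r < 1" and dec: "\<And>k i j. i < nx \<Longrightarrow> j < nx \<Longrightarrow> \<bar>(F ^\<^sub>m k) $$ (i,j)\<bar> \<le> K * r ^ k"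
    using decay[OF Fc nx_pos rhoF] by blast
  define Sig where "Sig = Slim nx F (H * transpose_mat H)"
  have HHc: "H * transpose_mat H \<in> carrier_mat nx nx" using Hc by simp
  have Sigc: "Sig \<in> carrier_mat nx nx" unfolding Sig_def by (rule Slim_carrier[OF Fc Hc r dec])
  have Sig_xt: "Sigma_xt nx A C Bw Dw L = Sig"
    unfolding Sigma_xt_def F_def[symmetric] H_def[symmetric]
  proof (rule the_equality)
    show "Sig \<in> carrier_mat nx nx \<and> Sig = F * Sig * transpose_mat F + H * transpose_mat H"
      using Sigc Slim_eq[OF Fc Hc r dec HHc] unfolding Sig_def by simp
    fix S assume "S \<in> carrier_mat nx nx \<and> S = F * S * transpose_mat F + H * transpose_mat H"
    then show "S = Sig" unfolding Sig_def using Lyap_unique[OF Fc Hc r dec HHc] by blast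
  qed
  have Pinv0: "0 \<le> v \<bullet> (Pinv *\<^sub>v v)" if v: "v \<in> carrier_vec nx" for v
  proof -
    have pv: "Pinv *\<^sub>v v \<in> carrier_vec nx" using Pic v by simp
    have "v \<bullet> (Pinv *\<^sub>v v) = (Pinv *\<^sub>v v) \<bullet> (P *\<^sub>v (Pinv *\<^sub>v v))"
      using PPv[OF v] comm_scalar_prod[OF v pv] by simp
    then show ?thesis using pd_nonneg[OF P pv] by simp
  qed
  have step: "qk F H 0 v + (transpose_mat F *\<^sub>v v) \<bullet> (Pinv *\<^sub>v (transpose_mat F *\<^sub>v v)) \<le> v \<bullet> (Pinv *\<^sub>v v)"
    if v: "v \<in> carrier_vec nx" for v
  proof -
    define ft where "ft = transpose_mat F *\<^sub>v v"
    have ft: "ft \<in> carrier_vec nx" unfolding ft_def using Fc v by simp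
    define y where "y = Pinv *\<^sub>v ft"
    define w where "w = transpose_mat H *\<^sub>v v"
    have y: "y \<in> carrier_vec nx" unfolding y_def using Pic ft by simp
    have w: "w \<in> carrier_vec nw" unfolding w_def using Hc v by simp
    define u where "u = F *\<^sub>v y + H *\<^sub>v w"
    have u: "u \<in> carrier_vec nx" unfolding u_def using Fc Hc y w by simp
    have q0: "qk F H 0 v = w \<bullet> w" using qk_def[OF Fc Hc r dec, of 0 v] unfolding w_def using Fc v by simp
    have yPy: "y \<bullet> (P *\<^sub>v y) = ft \<bullet> (Pinv *\<^sub>v ft)"
      unfolding y_def PPv[OF ft] using comm_scalar_prod[OF mult_mat_vec_carrier[OF Pic ft] ft] by simp
    have vu: "v \<bullet> u = ft \<bullet> (Pinv *\<^sub>v ft) + w \<bullet> w"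
    proof -
      have "v \<bullet> u = v \<bullet> (F *\<^sub>v y) + v \<bullet> (H *\<^sub>v w)"
        unfolding u_def using v Fc Hc y w by (simp add: scalar_prod_add_distrib[of v nx])
      also have "v \<bullet> (F *\<^sub>v y) = y \<bullet> ft" unfolding ft_def using tr_move[OF Fc y v] by simp
      also have "v \<bullet> (H *\<^sub>v w) = w \<bullet> w" unfolding w_def
        using tr_move[OF Hc _ v, of "transpose_mat H *\<^sub>v v"] Hc v by simp
      also have "y \<bullet> ft = ft \<bullet> (Pinv *\<^sub>v ft)" unfolding y_def using comm_scalar_prod[OF mult_mat_vec_carrier[OF Pic ft] ft] by simp
      finally show ?thesis .
    qed
    have ly: "u \<bullet> (P *\<^sub>v u) \<le> y \<bullet> (P *\<^sub>v y) + w \<bullet> w" using LY[OF y w] unfolding u_def by simp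
    have pv: "Pinv *\<^sub>v v \<in> carrier_vec nx" using Pic v by simp
    have "0 \<le> (1 \<cdot>\<^sub>v (Pinv *\<^sub>v v) + (-1) \<cdot>\<^sub>v u) \<bullet> (P *\<^sub>v (1 \<cdot>\<^sub>v (Pinv *\<^sub>v v) + (-1) \<cdot>\<^sub>v u))"
      using pd_nonneg[OF P, of "1 \<cdot>\<^sub>v (Pinv *\<^sub>v v) + (-1) \<cdot>\<^sub>v u"] pv u by simp
    also have "\<dots> = (Pinv *\<^sub>v v) \<bullet> (P *\<^sub>v (Pinv *\<^sub>v v)) - 2 * ((Pinv *\<^sub>v v) \<bullet> (P *\<^sub>v u)) + u \<bullet> (P *\<^sub>v u)"
      unfolding qf_expand[OF Pc Psym pv u] by simp
    also have "(Pinv *\<^sub>v v) \<bullet> (P *\<^sub>v u) = v \<bullet> u"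
      using sym_bil[OF Pc Psym pv u] PPv[OF v] comm_scalar_prod[OF u v] by simp
    also have "(Pinv *\<^sub>v v) \<bullet> (P *\<^sub>v (Pinv *\<^sub>v v)) = v \<bullet> (Pinv *\<^sub>v v)"
      using PPv[OF v] comm_scalar_prod[OF v pv] by simp
    finally have "0 \<le> v \<bullet> (Pinv *\<^sub>v v) - 2 * (v \<bullet> u) + u \<bullet> (P *\<^sub>v u)" .
    with vu ly yPy q0 show ?thesis unfolding ft_def[symmetric] by simp
  qed
  have Sig_le: "v \<bullet> (Sig *\<^sub>v v) \<le> v \<bullet> (Pinv *\<^sub>v v)" if "v \<in> carrier_vec nx" for v
    unfolding Sig_def by (rule Slim_le[OF Fc Hc r dec Pic Pinv0 step that])
  have Sig_nonneg: "0 \<le> v \<bullet> (Sig *\<^sub>v v)" if "v \<in> carrier_vec nx" for v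
    unfolding Sig_def by (rule Slim_nonneg[OF Fc Hc r dec that])
  have Sig_sym: "transpose_mat Sig = Sig" unfolding Sig_def by (rule Slim_sym[OF Fc Hc r dec])
  define S where "S = Sigma_rw nx A C Bw Dw L"
  have S_def': "S = C * Sig * transpose_mat C + Dw * transpose_mat Dw"
    unfolding S_def Sigma_rw_def Sig_xt ..
  have Sc: "S \<in> carrier_mat ny ny" unfolding S_def' using C Sigc Dw by simp
  have S_qf: "z \<bullet> (S *\<^sub>v z) = (transpose_mat C *\<^sub>v z) \<bullet> (Sig *\<^sub>v (transpose_mat C *\<^sub>v z)) + (transpose_mat Dw *\<^sub>v z) \<bullet> (transpose_mat Dw *\<^sub>v z)"
    if z: "z \<in> carrier_vec ny" for z
  proof -
    have ct: "transpose_mat C *\<^sub>v z \<in> carrier_vec nx" using C z by simp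
    have dt: "transpose_mat Dw *\<^sub>v z \<in> carrier_vec nw" using Dw z by simp
    have "S *\<^sub>v z = C *\<^sub>v (Sig *\<^sub>v (transpose_mat C *\<^sub>v z)) + Dw *\<^sub>v (transpose_mat Dw *\<^sub>v z)"
      unfolding S_def' using C Sigc Dw z
      by (simp add: add_mult_distrib_mat_vec[of _ ny ny] assoc_mult_mat_vec[of C ny nx "Sig * transpose_mat C" ny z]
          assoc_mult_mat_vec[of Sig nx nx "transpose_mat C" ny z] assoc_mult_mat_vec[of Dw ny nw "transpose_mat Dw" ny z])
    then have "z \<bullet> (S *\<^sub>v z) = z \<bullet> (C *\<^sub>v (Sig *\<^sub>v (transpose_mat C *\<^sub>v z))) + z \<bullet> (Dw *\<^sub>v (transpose_mat Dw *\<^sub>v z))"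
      using C Sigc Dw z by (simp add: scalar_prod_add_distrib[of z ny])
    also have "z \<bullet> (C *\<^sub>v (Sig *\<^sub>v (transpose_mat C *\<^sub>v z))) = (transpose_mat C *\<^sub>v z) \<bullet> (Sig *\<^sub>v (transpose_mat C *\<^sub>v z))"
      using transpose_vec_mult_scalar[OF C _ z, of "Sig *\<^sub>v (transpose_mat C *\<^sub>v z)"] Sigc ct by simp
    also have "z \<bullet> (Dw *\<^sub>v (transpose_mat Dw *\<^sub>v z)) = (transpose_mat Dw *\<^sub>v z) \<bullet> (transpose_mat Dw *\<^sub>v z)"
      using transpose_vec_mult_scalar[OF Dw dt z] by simp
    finally show ?thesis .
  qed
  have S_nonneg: "0 \<le> z \<bullet> (S *\<^sub>v z)" if z: "z \<in> carrier_vec ny" for z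
  proof -
    have "transpose_mat C *\<^sub>v z \<in> carrier_vec nx" using C z by simp
    moreover have "0 \<le> w \<bullet> (w :: real vec)" for w by (simp add: scalar_prod_def sum_nonneg)
    ultimately show ?thesis unfolding S_qf[OF z] using Sig_nonneg by (simp add: add_nonneg_nonneg)
  qed
  have S_sym: "transpose_mat S = S"
  proof -
    have "transpose_mat (C * Sig * transpose_mat C) = C * Sig * transpose_mat C"
      using trip_sym[of "transpose_mat C" nx ny Sig] C Sigc Sig_sym by simp
    moreover have "transpose_mat (Dw * transpose_mat Dw) = Dw * transpose_mat Dw"
      using transpose_mult[of Dw ny nw "transpose_mat Dw" ny] Dw by simp
    ultimately show ?thesis unfolding S_def' using transpose_add[of "C * Sig * transpose_mat C" ny ny] C Sigc Dw by simp
  qed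
  have Sinv: "invertible_mat S" using Sigma_inv unfolding S_def L_def Pinv_def .
  define Si where "Si = the (mat_inverse S)"
  have SS: "S * Si = 1\<^sub>m ny" "Si * S = 1\<^sub>m ny" "Si \<in> carrier_mat ny ny"
    unfolding Si_def by (rule mat_inv_ok[OF Sc invertible_ker[OF Sc Sinv]], assumption+)+
  have Sic: "Si \<in> carrier_mat ny ny" by (rule SS(3))
  have Si_sym: "transpose_mat Si = Si" by (rule inv_sym[OF Sc Sic S_sym SS(1) SS(2)])
  have SSiv: "S *\<^sub>v (Si *\<^sub>v z) = z" if "z \<in> carrier_vec ny" for z
    using SS(1) Sc Sic that by (metis assoc_mult_mat_vec one_mult_mat_vec)
  define Da where "Da = attack_mat ny na j"
  have Dac: "Da \<in> carrier_mat ny na" unfolding Da_def attack_mat_def by simp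
  define T where "T = (1\<^sub>m ny - C * L) * Da"
  have Tc: "T \<in> carrier_mat ny na" unfolding T_def
    using mult_carrier_mat[OF minus_carrier_mat[OF mult_carrier_mat[OF C Lc], of "1\<^sub>m ny"] Dac] .
  have Wc: "W \<in> carrier_mat ny ny" and Wsym: "transpose_mat W = W" using W unfolding psd_mat_def by auto
  define Mf where "Mf = (1 / 2) \<cdot>\<^sub>m (transpose_mat T * Si * T) - (1 / mu) \<cdot>\<^sub>m (transpose_mat Da * W * Da)"
  have Mfc: "Mf \<in> carrier_mat na na" unfolding Mf_def using Tc Sic Dac Wc by (simp add: minus_carrier_mat)
  have Mf_sym: "transpose_mat Mf = Mf"
  proof -
    have c1: "(1 / 2) \<cdot>\<^sub>m (transpose_mat T * Si * T) \<in> carrier_mat na na" using Tc Sic by simp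
    have c2: "(1 / mu) \<cdot>\<^sub>m (transpose_mat Da * W * Da) \<in> carrier_mat na na" using Dac Wc by simp
    show ?thesis unfolding Mf_def transpose_minus[OF c1 c2] transpose_smult_mat
      trip_sym[OF Tc Sic Si_sym] trip_sym[OF Dac Wc Wsym] ..
  qed
  have M3: "0 \<le> V \<bullet> (M3 *\<^sub>v V)" if "V \<in> carrier_vec (na + nr + (nx + nx + nw + nr))"
    and "M3 = (let M = four_block_mat (transpose_mat Y * Da + transpose_mat Da * Y)
                  (transpose_mat Da * transpose_mat RW) (RW * Da) ((2 * mu) \<cdot>\<^sub>m 1\<^sub>m nr);
            Gamma1 = hcat (hcat (transpose_mat Y * C) (transpose_mat Da * transpose_mat G))
                          (transpose_mat Y * Dw);
            Gamma2 = bdiag (bdiag ((1 / (2 + 1 / gamma)) \<cdot>\<^sub>m P) ((1 / gamma) \<cdot>\<^sub>m P))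
                           ((1 / 2) \<cdot>\<^sub>m 1\<^sub>m nw);
            N = bdiag Gamma1 (mu \<cdot>\<^sub>m 1\<^sub>m nr);
            Q = bdiag Gamma2 (mu \<cdot>\<^sub>m 1\<^sub>m nr)
        in four_block_mat M N (transpose_mat N) Q)" for V M3
    using LMI3 that unfolding psd_mat_def Da_def Let_def by auto
  have qf_final: "0 \<le> x \<bullet> (Mf *\<^sub>v x)" if x: "x \<in> carrier_vec na" for x
  proof -
    define a where "a = Y *\<^sub>v x"
    define d where "d = Da *\<^sub>v x"
    define e where "e = L *\<^sub>v d"
    define c where "c = transpose_mat C *\<^sub>v a"
    define k where "k = transpose_mat Dw *\<^sub>v a"
    define rv where "rv = RW *\<^sub>v d"
    have a: "a \<in> carrier_vec ny" unfolding a_def using Y x by simp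
    have d: "d \<in> carrier_vec ny" unfolding d_def using Dac x by simp
    have e: "e \<in> carrier_vec nx" unfolding e_def using Lc d by simp
    have c: "c \<in> carrier_vec nx" unfolding c_def using C a by simp
    have k: "k \<in> carrier_vec nw" unfolding k_def using Dw a by simp
    have rv: "rv \<in> carrier_vec nr" unfolding rv_def using RW d by simp
    have pc: "Pinv *\<^sub>v c \<in> carrier_vec nx" using Pic c by simp
    define g where "g = c \<bullet> (Pinv *\<^sub>v c)"
    define h where "h = e \<bullet> (P *\<^sub>v e)"
    define s where "s = k \<bullet> k"
    define t where "t = rv \<bullet> rv"
    define ad where "ad = a \<bullet> d"
    define ce where "ce = c \<bullet> e"
    have gP: "(Pinv *\<^sub>v c) \<bullet> (P *\<^sub>v (Pinv *\<^sub>v c)) = g" unfolding g_def PPv[OF c]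
      using comm_scalar_prod[OF pc c] by simp
    define p where "p = (- (2 + 1 / gamma)) \<cdot>\<^sub>v (Pinv *\<^sub>v c)"
    define q where "q = (- gamma) \<cdot>\<^sub>v e"
    define w where "w = (- 2) \<cdot>\<^sub>v k"
    define r where "r = (- (1 / mu)) \<cdot>\<^sub>v rv"
    define r2 where "r2 = (1 / mu) \<cdot>\<^sub>v rv"
    have p: "p \<in> carrier_vec nx" unfolding p_def using pc by simp
    have q: "q \<in> carrier_vec nx" unfolding q_def using e by simp
    have w: "w \<in> carrier_vec nw" unfolding w_def using k by simp
    have r: "r \<in> carrier_vec nr" unfolding r_def using rv by simp
    have r2: "r2 \<in> carrier_vec nr" unfolding r2_def using rv by simp
    have V: "(x @\<^sub>v r) @\<^sub>v (((p @\<^sub>v q) @\<^sub>v w) @\<^sub>v r2) \<in> carrier_vec (na + nr + (nx + nx + nw + nr))"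
      using x r p q w r2 by auto
    note L3 = lmi3_qf[OF Y Dac RW C G Dw Pc x r p q w r2, of mu "1 / (2 + 1 / gamma)" "1 / gamma"]
    have L3': "0 \<le> x \<bullet> ((transpose_mat Y * Da + transpose_mat Da * Y) *\<^sub>v x) + 2 * (x \<bullet> ((transpose_mat Da * transpose_mat RW) *\<^sub>v r))
           + 2 * mu * (r \<bullet> r)
           + 2 * (x \<bullet> ((transpose_mat Y * C) *\<^sub>v p) + x \<bullet> ((transpose_mat Da * transpose_mat G) *\<^sub>v q) + x \<bullet> ((transpose_mat Y * Dw) *\<^sub>v w))
           + 2 * mu * (r \<bullet> r2) + (1 / (2 + 1 / gamma)) * (p \<bullet> (P *\<^sub>v p)) + (1 / gamma) * (q \<bullet> (P *\<^sub>v q)) + 1/2 * (w \<bullet> w) + mu * (r2 \<bullet> r2)"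
      using M3[OF V refl] L3 by (simp only: Let_def)
    have T1: "x \<bullet> ((transpose_mat Y * Da + transpose_mat Da * Y) *\<^sub>v x) = 2 * ad"
    proof -
      have "(transpose_mat Y * Da + transpose_mat Da * Y) *\<^sub>v x = transpose_mat Y *\<^sub>v d + transpose_mat Da *\<^sub>v a"
        unfolding a_def d_def using Y Dac x
        by (simp add: add_mult_distrib_mat_vec[of _ na na] assoc_mult_mat_vec[of "transpose_mat Y" na ny Da na x]
           assoc_mult_mat_vec[of "transpose_mat Da" na ny Y na x])
      then show ?thesis unfolding ad_def using tr_move[OF Y x d] tr_move[OF Dac x a] Y Dac x a d
        by (simp add: scalar_prod_add_distrib[of x na] comm_scalar_prod[OF d a] a_def[symmetric] d_def[symmetric])
    qed
    have T2: "x \<bullet> ((transpose_mat Da * transpose_mat RW) *\<^sub>v r) = r \<bullet> rv"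
    proof -
      have rr: "transpose_mat RW *\<^sub>v r \<in> carrier_vec ny" using RW r by simp
      have "x \<bullet> ((transpose_mat Da * transpose_mat RW) *\<^sub>v r) = x \<bullet> (transpose_mat Da *\<^sub>v (transpose_mat RW *\<^sub>v r))"
        using Dac RW r by (simp add: assoc_mult_mat_vec[of "transpose_mat Da" na ny "transpose_mat RW" nr r])
      also have "\<dots> = (transpose_mat RW *\<^sub>v r) \<bullet> d" unfolding d_def by (rule tr_move[OF Dac x rr])
      also have "\<dots> = r \<bullet> rv" unfolding rv_def by (rule transpose_vec_mult_scalar[OF RW d r])
      finally show ?thesis .
    qed
    have T4: "x \<bullet> ((transpose_mat Y * C) *\<^sub>v p) = p \<bullet> c"
    proof -
      have cp: "C *\<^sub>v p \<in> carrier_vec ny" using C p by simp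
      have "x \<bullet> ((transpose_mat Y * C) *\<^sub>v p) = x \<bullet> (transpose_mat Y *\<^sub>v (C *\<^sub>v p))"
        using Y C p by (simp add: assoc_mult_mat_vec[of "transpose_mat Y" na ny C nx p])
      also have "\<dots> = (C *\<^sub>v p) \<bullet> a" unfolding a_def by (rule tr_move[OF Y x cp])
      also have "\<dots> = a \<bullet> (C *\<^sub>v p)" by (rule comm_scalar_prod[OF cp a])
      also have "\<dots> = p \<bullet> c" unfolding c_def by (rule tr_move[OF C p a, symmetric])
      finally show ?thesis .
    qed
    have T5: "x \<bullet> ((transpose_mat Da * transpose_mat G) *\<^sub>v q) = q \<bullet> (P *\<^sub>v e)"
    proof -
      have gq: "transpose_mat G *\<^sub>v q \<in> carrier_vec ny" using G q by simp
      have "x \<bullet> ((transpose_mat Da * transpose_mat G) *\<^sub>v q) = x \<bullet> (transpose_mat Da *\<^sub>v (transpose_mat G *\<^sub>v q))"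
        using Dac G q by (simp add: assoc_mult_mat_vec[of "transpose_mat Da" na ny "transpose_mat G" nx q])
      also have "\<dots> = (transpose_mat G *\<^sub>v q) \<bullet> d" unfolding d_def by (rule tr_move[OF Dac x gq])
      also have "\<dots> = q \<bullet> (G *\<^sub>v d)" by (rule transpose_vec_mult_scalar[OF G d q])
      also have "G *\<^sub>v d = P *\<^sub>v e" unfolding e_def PL[symmetric] using Pc Lc d by simp
      finally show ?thesis .
    qed
    have T6: "x \<bullet> ((transpose_mat Y * Dw) *\<^sub>v w) = w \<bullet> k"
    proof -
      have dw: "Dw *\<^sub>v w \<in> carrier_vec ny" using Dw w by simp
      have "x \<bullet> ((transpose_mat Y * Dw) *\<^sub>v w) = x \<bullet> (transpose_mat Y *\<^sub>v (Dw *\<^sub>v w))"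
        using Y Dw w by (simp add: assoc_mult_mat_vec[of "transpose_mat Y" na ny Dw nw w])
      also have "\<dots> = (Dw *\<^sub>v w) \<bullet> a" unfolding a_def by (rule tr_move[OF Y x dw])
      also have "\<dots> = a \<bullet> (Dw *\<^sub>v w)" by (rule comm_scalar_prod[OF dw a])
      also have "\<dots> = w \<bullet> k" unfolding k_def by (rule tr_move[OF Dw w a, symmetric])
      finally show ?thesis .
    qed
    have S1: "p \<bullet> c = - (2 + 1 / gamma) * g" unfolding p_def g_def
      using pc c comm_scalar_prod[OF pc c] by simp
    have S2: "q \<bullet> (P *\<^sub>v e) = - gamma * h" unfolding q_def h_def using e Pc by simp
    have S3: "w \<bullet> k = - 2 * s" unfolding w_def s_def using k by simp
    have S4: "r \<bullet> rv = - (1 / mu) * t" unfolding r_def t_def using rv by simp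
    have S5: "r \<bullet> r = (1 / mu) * (1 / mu) * t" unfolding r_def t_def using rv by simp
    have S6: "r \<bullet> r2 = - (1 / mu) * (1 / mu) * t" unfolding r_def r2_def t_def using rv by simp
    have S7: "r2 \<bullet> r2 = (1 / mu) * (1 / mu) * t" unfolding r2_def t_def using rv by simp
    have S8: "p \<bullet> (P *\<^sub>v p) = (2 + 1 / gamma) * (2 + 1 / gamma) * g" unfolding p_def
      using pc Pc gP by (simp add: mult_mat_vec[OF Pc pc] algebra_simps)
    have S9: "q \<bullet> (P *\<^sub>v q) = gamma * gamma * h" unfolding q_def h_def
      using e Pc by (simp add: mult_mat_vec[OF Pc e])
    have S10: "w \<bullet> w = 4 * s" unfolding w_def s_def using k by simp
    have L3'': "0 \<le> 2 * ad - t / mu - (2 + 1 / gamma) * g - gamma * h - 2 * s"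
    proof -
      have "0 \<le> 2 * ad + 2 * (- (1 / mu) * t) + 2 * mu * ((1 / mu) * (1 / mu) * t)
           + 2 * (- (2 + 1 / gamma) * g + - gamma * h + - 2 * s)
           + 2 * mu * (- (1 / mu) * (1 / mu) * t) + (1 / (2 + 1 / gamma)) * ((2 + 1 / gamma) * (2 + 1 / gamma) * g)
           + (1 / gamma) * (gamma * gamma * h) + 1/2 * (4 * s) + mu * ((1 / mu) * (1 / mu) * t)"
        using L3' unfolding T1 T2 T4 T5 T6 S1 S2 S3 S4 S5 S6 S7 S8 S9 S10 .
      moreover have "2 * ad + 2 * (- (1 / mu) * t) + 2 * mu * ((1 / mu) * (1 / mu) * t)
           + 2 * (- (2 + 1 / gamma) * g + - gamma * h + - 2 * s)
           + 2 * mu * (- (1 / mu) * (1 / mu) * t) + (1 / (2 + 1 / gamma)) * ((2 + 1 / gamma) * (2 + 1 / gamma) * g)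
           + (1 / gamma) * (gamma * gamma * h) + 1/2 * (4 * s) + mu * ((1 / mu) * (1 / mu) * t)
           = 2 * ad - t / mu - (2 + 1 / gamma) * g - gamma * h - 2 * s"
      proof -
        have "0 < 1 / gamma" using gamma by simp
        then have g2: "2 + 1 / gamma \<noteq> 0" by linarith
        have zz: "(1 / z) * (z * z * g) = z * g" if "z \<noteq> 0" for z :: real
          using that by (simp add: field_simps)
        have gg: "(1 / gamma) * (gamma * gamma * h) = gamma * h" using gamma by (simp add: field_simps)
        show ?thesis unfolding zz[OF g2] gg using mu by (simp add: field_simps)
      qed
      ultimately show ?thesis by linarith
    qed
    define tau where "tau = T *\<^sub>v x"
    have CLd: "(C * L) *\<^sub>v d = C *\<^sub>v e" unfolding e_def using C Lc d by simp
    have tau_eq: "tau = d - C *\<^sub>v e"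
    proof -
      have "tau = (1\<^sub>m ny - C * L) *\<^sub>v d" unfolding tau_def T_def d_def
        using C Lc Dac x by (simp add: assoc_mult_mat_vec[of "1\<^sub>m ny - C * L" ny ny Da na x] minus_carrier_mat)
      also have "\<dots> = d - C *\<^sub>v e" using C Lc d CLd by (simp add: minus_mult_distrib_mat_vec[of _ ny ny])
      finally show ?thesis .
    qed
    have tau: "tau \<in> carrier_vec ny" unfolding tau_eq using d C e by simp
    have siT: "Si *\<^sub>v tau \<in> carrier_vec ny" using Sic tau by simp
    have ClaimA: "4 * (a \<bullet> tau) - 4 * (a \<bullet> (S *\<^sub>v a)) \<le> tau \<bullet> (Si *\<^sub>v tau)"
    proof -
      have "0 \<le> (1 \<cdot>\<^sub>v (Si *\<^sub>v tau) + (-2) \<cdot>\<^sub>v a) \<bullet> (S *\<^sub>v (1 \<cdot>\<^sub>v (Si *\<^sub>v tau) + (-2) \<cdot>\<^sub>v a))"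
        by (rule S_nonneg, insert siT a, simp)
      also have "\<dots> = (Si *\<^sub>v tau) \<bullet> (S *\<^sub>v (Si *\<^sub>v tau)) - 4 * ((Si *\<^sub>v tau) \<bullet> (S *\<^sub>v a)) + 4 * (a \<bullet> (S *\<^sub>v a))"
        unfolding qf_expand[OF Sc S_sym siT a] by simp
      also have "(Si *\<^sub>v tau) \<bullet> (S *\<^sub>v (Si *\<^sub>v tau)) = tau \<bullet> (Si *\<^sub>v tau)"
        unfolding SSiv[OF tau] by (rule comm_scalar_prod[OF siT tau])
      also have "(Si *\<^sub>v tau) \<bullet> (S *\<^sub>v a) = a \<bullet> tau"
        using sym_bil[OF Sc S_sym siT a] SSiv[OF tau] by simp
      finally show ?thesis by simp
    qed
    have ClaimB: "a \<bullet> (S *\<^sub>v a) \<le> g + s"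
      unfolding S_qf[OF a] c_def[symmetric] k_def[symmetric] g_def s_def using Sig_le[OF c] by simp
    have ClaimC: "a \<bullet> tau = ad - ce"
    proof -
      have ce: "C *\<^sub>v e \<in> carrier_vec ny" using C e by simp
      have "a \<bullet> tau = a \<bullet> d - a \<bullet> (C *\<^sub>v e)" unfolding tau_eq by (rule scalar_prod_minus_distrib[OF a d ce])
      also have "a \<bullet> (C *\<^sub>v e) = e \<bullet> c" unfolding c_def by (rule tr_move[OF C e a, symmetric])
      also have "e \<bullet> c = ce" unfolding ce_def by (rule comm_scalar_prod[OF e c])
      finally show ?thesis unfolding ad_def .
    qed
    have ClaimD: "0 \<le> gamma * h - 2 * ce + g / gamma"
    proof -
      have "0 \<le> (1 \<cdot>\<^sub>v e + (- (1 / gamma)) \<cdot>\<^sub>v (Pinv *\<^sub>v c)) \<bullet> (P *\<^sub>v (1 \<cdot>\<^sub>v e + (- (1 / gamma)) \<cdot>\<^sub>v (Pinv *\<^sub>v c)))"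
        by (rule pd_nonneg[OF P], insert e pc, simp)
      also have "\<dots> = h - 2 / gamma * (e \<bullet> (P *\<^sub>v (Pinv *\<^sub>v c))) + (1 / gamma) * (1 / gamma) * g"
        unfolding qf_expand[OF Pc Psym e pc] h_def[symmetric] gP by simp
      also have "e \<bullet> (P *\<^sub>v (Pinv *\<^sub>v c)) = ce" unfolding PPv[OF c] ce_def by (rule comm_scalar_prod[OF e c])
      finally have "0 \<le> h - 2 / gamma * ce + (1 / gamma) * (1 / gamma) * g" .
      then have "0 \<le> gamma * (h - 2 / gamma * ce + (1 / gamma) * (1 / gamma) * g)" using gamma by simp
      also have "gamma * (h - 2 / gamma * ce + (1 / gamma) * (1 / gamma) * g) = gamma * h - 2 * ce + g / gamma"
        using gamma by (simp add: field_simps)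
      finally show ?thesis .
    qed
    have Fin: "x \<bullet> (Mf *\<^sub>v x) = 1 / 2 * (tau \<bullet> (Si *\<^sub>v tau)) - 1 / mu * t"
    proof -
      have c1: "transpose_mat T * Si * T \<in> carrier_mat na na" using Tc Sic by simp
      have c2: "transpose_mat Da * W * Da \<in> carrier_mat na na" using Dac Wc by simp
      have dw: "(Da *\<^sub>v x) \<bullet> (W *\<^sub>v (Da *\<^sub>v x)) = t"
      proof -
        have "W *\<^sub>v d = transpose_mat RW *\<^sub>v rv" unfolding W_fact rv_def using RW d by simp
        then show ?thesis unfolding d_def[symmetric] t_def using tr_move[OF RW d rv] by (simp add: rv_def)
      qed
      show ?thesis unfolding Mf_def minus_smult_qf[OF c1 c2 x] trip_qf[OF Tc Sic x] trip_qf[OF Dac Wc x]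
        tau_def[symmetric] dw ..
    qed
    have e1: "(2 + 1 / gamma) * g = 2 * g + g / gamma" by (simp add: field_simps)
    have e2: "1 / mu * t = t / mu" by simp
    show ?thesis unfolding Fin e2 using ClaimA ClaimB ClaimC ClaimD L3'' e1 by linarith
  qed
  show ?thesis
    unfolding Let_def Pinv_def[symmetric] L_def[symmetric] F_def[symmetric] S_def[symmetric] Si_def[symmetric]
      Da_def[symmetric] T_def[symmetric] Mf_def[symmetric]
    using rhoF Mfc Mf_sym qf_final unfolding psd_mat_def by auto
qed


end
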